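(* Let $1\le p\le q\le\infty$ and let $X$ be a Tychonoff space. Then: (i) $C_p(X)$ has the $EGP_{(p,q)}$ property if and only if $X$ is discrete; (ii) $C_p(X)$ has the $b$-$EGP_{(p,q)}$ property if and only if every functionally bounded subset of $X$ is finite; (iii) $C_p(X)$ always has the $prEGP_{(p,q)}$ property and hence the $prGP_{(p,q)}$ property.
   Context: $C_p(X)$ is the space of continuous scalar functions on $X$ with the pointwise topology. A subset $A$ of $X$ is functionally bounded if $f(A)$ is bounded for every continuous $f$ on $X$. For $A\subseteq E$ and $\chi\in E'$, $\|\chi\|_A:=\sup\{|\chi(x)|:x\in A\cup\{0\}\}$. A sequence $(\chi_n)$ in $E'$ is weak$^*$ $p$-summable if $(\chi_n(x))_n\in\ell_p$ for every $x\in E$ (in $c_0$ if $p=\infty$). A nonempty $A\subseteq E$ is $(p,q)$-limited (resp. $(p,q)$-$\mathcal E$-limited) if for every (resp. every equicontinuous) weak$^*$ $p$-summable sequence $(\chi_n)$ in $E'$, $(\|\chi_n\|_A)_n\in\ell_q$ if $q<\infty$ and $\|\chi_n\|_A\to0$ if $q=\infty$. $E$ has the $EGP_{(p,q)}$ property if every $(p,q)$-$\mathcal E$-limited set is relatively compact; the $prEGP_{(p,q)}$ (resp. $prGP_{(p,q)}$) property if every $(p,q)$-$\mathcal E$-limited (resp. $(p,q)$-limited) set is precompact; the $b$-$EGP_{(p,q)}$ property if every $(p,q)$-$\mathcal E$-limited set is precompact in the strong topology $\beta(E,E')$. *)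

theory Defs
  imports "HOL-Analysis.Analysis" "HOL-Library.Function_Algebras"
begin

instantiation "fun" :: (type, real_vector) real_vector
begin
definition scaleR_fun :: "real \<Rightarrow> ('a \<Rightarrow> 'b) \<Rightarrow> 'a \<Rightarrow> 'b" where
  "scaleR_fun c f = (\<lambda>x. c *\<^sub>R f x)"
instance
  by standard (auto simp: scaleR_fun_def fun_eq_iff scaleR_add_right scaleR_add_left)
end

text \<open>Continuous linear functionals on E (the dual E'); functionals are normalised
  to vanish outside E.\<close>
definition dual_space :: "'v::real_vector topology \<Rightarrow> ('v \<Rightarrow> real) set" where
  "dual_space T = {\<phi>.
     (\<forall>x\<in>topspace T. \<forall>y\<in>topspace T. \<phi> (x + y) = \<phi> x + \<phi> y) \<and>
     (\<forall>c. \<forall>x\<in>topspace T. \<phi> (c *\<^sub>R x) = c * \<phi> x) \<and>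
     continuous_map T euclideanreal \<phi> \<and>
     (\<forall>x. x \<notin> topspace T \<longrightarrow> \<phi> x = 0)}"

definition equicontinuous_set :: "'v::real_vector topology \<Rightarrow> ('v \<Rightarrow> real) set \<Rightarrow> bool" where
  "equicontinuous_set T H \<longleftrightarrow>
     (\<forall>\<epsilon>>0. \<exists>U. openin T U \<and> 0 \<in> U \<and> (\<forall>\<phi>\<in>H. \<forall>x\<in>U. \<bar>\<phi> x\<bar> \<le> \<epsilon>))"

text \<open>Membership in l_p for 1 \<le> p < \<infinity>, and in c_0 for p = \<infinity>.\<close>
definition in_lp :: "ereal \<Rightarrow> (nat \<Rightarrow> real) \<Rightarrow> bool" where
  "in_lp p a \<longleftrightarrow>
     (if p = \<infinity> then a \<longlonglongrightarrow> 0 else summable (\<lambda>n. \<bar>a n\<bar> powr real_of_ereal p))"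

definition norm_on :: "'v::real_vector set \<Rightarrow> ('v \<Rightarrow> real) \<Rightarrow> ereal" where
  "norm_on A \<phi> = (SUP x\<in>A \<union> {0}. ereal \<bar>\<phi> x\<bar>)"

definition in_lq_ereal :: "ereal \<Rightarrow> (nat \<Rightarrow> ereal) \<Rightarrow> bool" where
  "in_lq_ereal q s \<longleftrightarrow>
     (if q = \<infinity> then s \<longlonglongrightarrow> 0
      else (\<forall>n. s n \<noteq> \<infinity>) \<and> summable (\<lambda>n. real_of_ereal (s n) powr real_of_ereal q))"

definition weak_star_summable :: "ereal \<Rightarrow> 'v::real_vector topology \<Rightarrow> (nat \<Rightarrow> 'v \<Rightarrow> real) \<Rightarrow> bool" where
  "weak_star_summable p T \<phi> \<longleftrightarrow>
     (\<forall>n. \<phi> n \<in> dual_space T) \<and> (\<forall>x\<in>topspace T. in_lp p (\<lambda>n. \<phi> n x))"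

definition pq_limited :: "ereal \<Rightarrow> ereal \<Rightarrow> 'v::real_vector topology \<Rightarrow> 'v set \<Rightarrow> bool" where
  "pq_limited p q T A \<longleftrightarrow> A \<noteq> {} \<and> A \<subseteq> topspace T \<and>
     (\<forall>\<phi>. weak_star_summable p T \<phi> \<longrightarrow> in_lq_ereal q (\<lambda>n. norm_on A (\<phi> n)))"

definition pq_E_limited :: "ereal \<Rightarrow> ereal \<Rightarrow> 'v::real_vector topology \<Rightarrow> 'v set \<Rightarrow> bool" where
  "pq_E_limited p q T A \<longleftrightarrow> A \<noteq> {} \<and> A \<subseteq> topspace T \<and>
     (\<forall>\<phi>. weak_star_summable p T \<phi> \<and> equicontinuous_set T (range \<phi>)
           \<longrightarrow> in_lq_ereal q (\<lambda>n. norm_on A (\<phi> n)))"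

definition relatively_compact :: "'v topology \<Rightarrow> 'v set \<Rightarrow> bool" where
  "relatively_compact T A \<longleftrightarrow> compactin T (T closure_of A)"

definition precompact :: "'v::real_vector topology \<Rightarrow> 'v set \<Rightarrow> bool" where
  "precompact T A \<longleftrightarrow>
     (\<forall>U. openin T U \<and> 0 \<in> U \<longrightarrow>
        (\<exists>F. finite F \<and> F \<subseteq> topspace T \<and> A \<subseteq> (\<Union>f\<in>F. (\<lambda>u. f + u) ` U)))"

text \<open>Precompact in the strong topology beta(E,E'), whose basic 0-neighbourhoods are
  the sets eps * B-polar with B a weak*-bounded subset of E'.\<close>
definition strongly_precompact :: "'v::real_vector topology \<Rightarrow> 'v set \<Rightarrow> bool" where
  "strongly_precompact T A \<longleftrightarrow>
     (\<forall>B \<subseteq> dual_space T. (\<forall>x\<in>topspace T. bounded ((\<lambda>\<phi>. \<phi> x) ` B)) \<longrightarrow>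
        (\<forall>\<epsilon>>0. \<exists>F. finite F \<and> F \<subseteq> topspace T \<and>
           A \<subseteq> (\<Union>f\<in>F. (\<lambda>u. f + u) ` {u\<in>topspace T. \<forall>\<phi>\<in>B. \<bar>\<phi> u\<bar> \<le> \<epsilon>})))"

definition EGP :: "ereal \<Rightarrow> ereal \<Rightarrow> 'v::real_vector topology \<Rightarrow> bool" where
  "EGP p q T \<longleftrightarrow> (\<forall>A. pq_E_limited p q T A \<longrightarrow> relatively_compact T A)"

definition prEGP :: "ereal \<Rightarrow> ereal \<Rightarrow> 'v::real_vector topology \<Rightarrow> bool" where
  "prEGP p q T \<longleftrightarrow> (\<forall>A. pq_E_limited p q T A \<longrightarrow> precompact T A)"

definition prGP :: "ereal \<Rightarrow> ereal \<Rightarrow> 'v::real_vector topology \<Rightarrow> bool" where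
  "prGP p q T \<longleftrightarrow> (\<forall>A. pq_limited p q T A \<longrightarrow> precompact T A)"

definition bEGP :: "ereal \<Rightarrow> ereal \<Rightarrow> 'v::real_vector topology \<Rightarrow> bool" where
  "bEGP p q T \<longleftrightarrow> (\<forall>A. pq_E_limited p q T A \<longrightarrow> strongly_precompact T A)"

text \<open>Continuous real functions on X (normalised to 0 outside topspace X), with the
  topology of pointwise convergence (subspace of the product topology on 'a \<Rightarrow> real).\<close>
definition Cp :: "'a topology \<Rightarrow> ('a \<Rightarrow> real) topology" where
  "Cp X = subtopology euclidean
     {f. continuous_map X euclideanreal f \<and> (\<forall>x. x \<notin> topspace X \<longrightarrow> f x = 0)}"

definition tychonoff_space :: "'a topology \<Rightarrow> bool" where
  "tychonoff_space X \<longleftrightarrow> completely_regular_space X \<and> Hausdorff_space X"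

definition functionally_bounded :: "'a topology \<Rightarrow> 'a set \<Rightarrow> bool" where
  "functionally_bounded X A \<longleftrightarrow> A \<subseteq> topspace X \<and>
     (\<forall>f. continuous_map X euclideanreal f \<longrightarrow> bounded (f ` A))"

end

theory Submission
  imports Defs
begin


definition CS :: "'a topology \<Rightarrow> ('a \<Rightarrow> real) set" where
  "CS X = {f. continuous_map X euclideanreal f \<and> (\<forall>x. x \<notin> topspace X \<longrightarrow> f x = 0)}"

lemma topspace_Cp: "topspace (Cp X) = CS X"
  by (simp add: Cp_def CS_def)

lemma openin_Cp: "openin (Cp X) U \<longleftrightarrow> (\<exists>V. open V \<and> U = CS X \<inter> V)"
  by (auto simp add: Cp_def CS_def openin_subtopology)

lemma CS_0: "(0::'a\<Rightarrow>real) \<in> CS X"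
  by (simp add: CS_def zero_fun_def)

lemma CS_add: "f \<in> CS X \<Longrightarrow> g \<in> CS X \<Longrightarrow> f + g \<in> CS X"
  by (auto simp add: CS_def plus_fun_def intro: continuous_map_add)

lemma CS_scaleR: "f \<in> CS X \<Longrightarrow> c *\<^sub>R f \<in> CS X"
  by (auto simp add: CS_def scaleR_fun_def intro: continuous_map_real_mult_left)

lemma CS_minus: "f \<in> CS X \<Longrightarrow> - f \<in> CS X"
  by (auto simp add: CS_def fun_Compl_def intro: continuous_map_minus)

lemma CS_diff: "f \<in> CS X \<Longrightarrow> g \<in> CS X \<Longrightarrow> f - g \<in> CS X"
  by (auto simp add: CS_def fun_diff_def intro: continuous_map_diff)

lemma CS_sum: "(\<And>i. i \<in> I \<Longrightarrow> f i \<in> CS X) \<Longrightarrow> sum f I \<in> CS X"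
  by (induction I rule: infinite_finite_induct) (auto simp: CS_0 CS_add)

lemma CS_mult: "f \<in> CS X \<Longrightarrow> continuous_map X euclideanreal g \<Longrightarrow> (\<lambda>x. f x * g x) \<in> CS X"
  by (auto simp add: CS_def intro: continuous_map_real_mult)

lemma sum_fun_apply: "(sum f I) x = (\<Sum>i\<in>I. f i x)" for f :: "'i \<Rightarrow> 'a \<Rightarrow> real"
  by (induction I rule: infinite_finite_induct) auto

lemma open_fun_basic:
  fixes U :: "('a \<Rightarrow> real) set"
  assumes "open U" "g \<in> U"
  shows "\<exists>K \<delta>. finite K \<and> \<delta> > 0 \<and> {h. \<forall>x\<in>K. \<bar>h x - g x\<bar> < \<delta>} \<subseteq> U"
proof -
  have op: "openin (product_topology (\<lambda>i. euclidean) UNIV) U" using assms(1) by (simp add: open_fun_def)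
  obtain Y where Y: "g \<in> (\<Pi>\<^sub>E i\<in>UNIV. Y i)" "\<And>i. openin euclidean (Y i)"
     "finite {i. Y i \<noteq> topspace euclidean}" "(\<Pi>\<^sub>E i\<in>UNIV. Y i) \<subseteq> U"
    using product_topology_open_contains_basis[OF op assms(2)] by blast
  define K where "K = {i. Y i \<noteq> UNIV}"
  have fK: "finite K" using Y(3) by (simp add: K_def)
  have "\<forall>i. \<exists>d>0. ball (g i) d \<subseteq> Y i"
  proof
    fix i
    have "g i \<in> Y i" using Y(1) by (simp add: PiE_iff)
    moreover have "open (Y i)" using Y(2) by simp
    ultimately show "\<exists>d>0. ball (g i) d \<subseteq> Y i" by (simp add: open_contains_ball)
  qed
  from choice[OF this] obtain d where d0: "\<forall>i. d i > 0 \<and> ball (g i) (d i) \<subseteq> Y i" by blast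
  then have d: "\<And>i. d i > 0" "\<And>i. ball (g i) (d i) \<subseteq> Y i" by auto
  define \<delta> where "\<delta> = Min (insert 1 (d ` K))"
  have dpos: "\<delta> > 0" using fK d(1) by (simp add: \<delta>_def)
  have dle: "\<And>i. i \<in> K \<Longrightarrow> \<delta> \<le> d i" using fK by (simp add: \<delta>_def)
  have "{h. \<forall>x\<in>K. \<bar>h x - g x\<bar> < \<delta>} \<subseteq> (\<Pi>\<^sub>E i\<in>UNIV. Y i)"
  proof (clarsimp simp: PiE_iff)
    fix h i assume h: "\<forall>x\<in>K. \<bar>h x - g x\<bar> < \<delta>"
    show "h i \<in> Y i"
    proof (cases "i \<in> K")
      case True
      then have "h i \<in> ball (g i) (d i)" using h dle[OF True] by (auto simp: dist_real_def)
      then show ?thesis using d(2) by blast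
    next
      case False then show ?thesis by (simp add: K_def)
    qed
  qed
  then have "{h. \<forall>x\<in>K. \<bar>h x - g x\<bar> < \<delta>} \<subseteq> U" using Y(4) by (rule order_trans)
  with fK dpos show ?thesis by (intro exI[of _ K] exI[of _ \<delta>]) simp
qed

lemma openin_Cp_basic:
  assumes "openin (Cp X) U" "g \<in> U"
  shows "\<exists>K \<delta>. finite K \<and> K \<subseteq> topspace X \<and> \<delta> > 0 \<and> {h \<in> CS X. \<forall>x\<in>K. \<bar>h x - g x\<bar> < \<delta>} \<subseteq> U"
proof -
  obtain V where V: "open V" "U = CS X \<inter> V" using assms(1) by (auto simp: openin_Cp)
  obtain K \<delta> where K: "finite K" "\<delta> > 0" "{h. \<forall>x\<in>K. \<bar>h x - g x\<bar> < \<delta>} \<subseteq> V"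
    using open_fun_basic[OF V(1)] assms(2) V(2) by blast
  have gC: "g \<in> CS X" using assms(2) V by auto
  show ?thesis
  proof (intro exI conjI)
    show "finite (K \<inter> topspace X)" using K by simp
    show "K \<inter> topspace X \<subseteq> topspace X" by simp
    show "{h \<in> CS X. \<forall>x\<in>K \<inter> topspace X. \<bar>h x - g x\<bar> < \<delta>} \<subseteq> U"
    proof clarify
      fix h assume h: "h \<in> CS X" "\<forall>x\<in>K \<inter> topspace X. \<bar>h x - g x\<bar> < \<delta>"
      have "\<forall>x\<in>K. \<bar>h x - g x\<bar> < \<delta>"
      proof
        fix x assume "x \<in> K"
        show "\<bar>h x - g x\<bar> < \<delta>"
        proof (cases "x \<in> topspace X")
          case True then show ?thesis using h(2) \<open>x \<in> K\<close> by blast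
        next
          case False then show ?thesis using h(1) gC K(2) by (simp add: CS_def)
        qed
      qed
      then show "h \<in> U" using K(3) h(1) V(2) by auto
    qed
  qed (use K in auto)
qed

lemma open_fun_finite_nbhd:
  fixes g :: "'a \<Rightarrow> real"
  assumes "finite K"
  shows "open {h. \<forall>x\<in>K. \<bar>h x - g x\<bar> < \<delta>}"
proof -
  have "open {h. \<forall>x\<in>K. h (id x) \<in> ball (g x) \<delta>}"
    by (rule product_topology_basis') (use assms in auto)
  moreover have "{h. \<forall>x\<in>K. h (id x) \<in> ball (g x) \<delta>} = {h. \<forall>x\<in>K. \<bar>h x - g x\<bar> < \<delta>}"
    by (auto simp: dist_real_def abs_minus_commute)
  ultimately show ?thesis by simp
qed

lemma openin_Cp_finite_nbhd:
  assumes "finite K"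
  shows "openin (Cp X) {h \<in> CS X. \<forall>x\<in>K. \<bar>h x - g x\<bar> < \<delta>}"
  unfolding openin_Cp using open_fun_finite_nbhd[OF assms, of g \<delta>] by blast

lemma interp:
  assumes "tychonoff_space X" "finite K" "K \<subseteq> topspace X" "x \<in> topspace X"
  shows "\<exists>e\<in>CS X. e x = 1 \<and> (\<forall>y\<in>K-{x}. e y = 0) \<and> (\<forall>y. 0 \<le> e y \<and> e y \<le> 1)"
proof -
  have t1: "t1_space X" using assms(1) Hausdorff_imp_t1_space by (auto simp: tychonoff_space_def)
  have "closedin X (K - {x})"
    using t1 assms(2,3) by (auto simp: t1_space_closedin_finite)
  then obtain f :: "'a \<Rightarrow> real" where f: "continuous_map X (top_of_set {0..1}) f" "f x = 0" "f ` (K-{x}) \<subseteq> {1}"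
    using assms(1,4) unfolding tychonoff_space_def completely_regular_space_def by blast
  have fc: "continuous_map X euclideanreal f" and fr: "\<And>y. y \<in> topspace X \<Longrightarrow> f y \<in> {0..1}"
    using f(1) by (auto simp: continuous_map_in_subtopology)
  define e where "e = (\<lambda>y. if y \<in> topspace X then 1 - f y else 0)"
  have "continuous_map X euclideanreal e"
    by (rule continuous_map_eq[of _ _ "\<lambda>y. 1 - f y"]) (auto simp: e_def intro!: continuous_map_diff fc)
  then have "e \<in> CS X" by (simp add: CS_def e_def)
  moreover have "e x = 1" using assms(4) f(2) by (simp add: e_def)
  moreover have "\<forall>y\<in>K-{x}. e y = 0" using f(3) assms(3) by (auto simp: e_def)
  moreover have "\<forall>y. 0 \<le> e y \<and> e y \<le> 1" using fr by (auto simp: e_def)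
  ultimately show ?thesis by blast
qed


lemma abs_to0:
  fixes a :: "nat \<Rightarrow> real"
  assumes s: "summable (\<lambda>n. \<bar>a n\<bar> powr r)" and r: "r > 0"
  shows "a \<longlonglongrightarrow> 0"
proof -
  have t: "(\<lambda>n. \<bar>a n\<bar> powr r) \<longlonglongrightarrow> 0" using summable_LIMSEQ_zero[OF s] .
  have "(\<lambda>n. (\<bar>a n\<bar> powr r) powr (1/r)) \<longlonglongrightarrow> 0 powr (1/r)"
    by (rule tendsto_powr'[OF t tendsto_const]) (use r in auto)
  moreover have "(\<lambda>n. (\<bar>a n\<bar> powr r) powr (1/r)) = (\<lambda>n. \<bar>a n\<bar>)" using r by (simp add: powr_powr)
  ultimately have "(\<lambda>n. \<bar>a n\<bar>) \<longlonglongrightarrow> 0" by simp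
  then show ?thesis by (simp add: tendsto_rabs_zero_iff)
qed

lemma ereal_fin_cases:
  assumes "1 \<le> p" "p \<noteq> \<infinity>"
  shows "p = ereal (real_of_ereal p) \<and> real_of_ereal p \<ge> 1"
  using assms by (cases p) auto

lemma in_lp_mono:
  assumes "1 \<le> p" "p \<le> q" "in_lp p a"
  shows "in_lp q a"
proof (cases "p = \<infinity>")
  case True then have "q = \<infinity>" using assms(2) by auto
  then show ?thesis using assms(3) True by (simp add: in_lp_def)
next
  case pf: False
  define p' where "p' = real_of_ereal p"
  have pp: "p = ereal p'" and p1: "p' \<ge> 1" using ereal_fin_cases[OF assms(1) pf] by (auto simp: p'_def)
  have s: "summable (\<lambda>n. \<bar>a n\<bar> powr p')" using assms(3) pf by (simp add: in_lp_def p'_def)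
  have a0: "a \<longlonglongrightarrow> 0" using abs_to0[OF s] p1 by simp
  show ?thesis
  proof (cases "q = \<infinity>")
    case True then show ?thesis using a0 by (simp add: in_lp_def)
  next
    case qf: False
    define q' where "q' = real_of_ereal q"
    have q1: "1 \<le> q" using assms(1,2) by (rule order_trans)
    have qq: "q = ereal q'" using ereal_fin_cases[OF q1 qf] by (simp add: q'_def)
    have pq: "p' \<le> q'" using assms(2) pp qq by simp
    have ev: "eventually (\<lambda>n. \<bar>a n\<bar> < 1) sequentially"
      using order_tendstoD(2)[OF tendsto_rabs_zero[OF a0]] by simp
    have "eventually (\<lambda>n. norm (\<bar>a n\<bar> powr q') \<le> \<bar>a n\<bar> powr p') sequentially"
      using ev by eventually_elim (use pq in \<open>auto intro!: powr_mono'\<close>)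
    then have "summable (\<lambda>n. \<bar>a n\<bar> powr q')" using s by (rule summable_comparison_test_ev)
    then show ?thesis using qf by (simp add: in_lp_def q'_def)
  qed
qed

lemma powr_add_le:
  fixes u v r :: real
  assumes "r \<ge> 0"
  shows "(\<bar>u\<bar> + \<bar>v\<bar>) powr r \<le> 2 powr r * (\<bar>u\<bar> powr r + \<bar>v\<bar> powr r)"
proof -
  define m where "m = max \<bar>u\<bar> \<bar>v\<bar>"
  have "(\<bar>u\<bar> + \<bar>v\<bar>) powr r \<le> (2 * m) powr r"
    by (rule powr_mono2) (use assms in \<open>auto simp: m_def\<close>)
  also have "\<dots> = 2 powr r * m powr r" by (simp add: powr_mult m_def)
  also have "m powr r \<le> \<bar>u\<bar> powr r + \<bar>v\<bar> powr r" by (simp add: m_def max_def)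
  then have "2 powr r * m powr r \<le> 2 powr r * (\<bar>u\<bar> powr r + \<bar>v\<bar> powr r)"
    by (intro mult_left_mono) auto
  finally show ?thesis .
qed

lemma in_lp_add:
  assumes "1 \<le> q" "in_lp q u" "in_lp q v"
  shows "in_lp q (\<lambda>n. \<bar>u n\<bar> + \<bar>v n\<bar>)"
proof (cases "q = \<infinity>")
  case True
  then have "u \<longlonglongrightarrow> 0" "v \<longlonglongrightarrow> 0" using assms by (auto simp: in_lp_def)
  then have "(\<lambda>n. \<bar>u n\<bar> + \<bar>v n\<bar>) \<longlonglongrightarrow> 0 + 0"
    by (intro tendsto_add tendsto_rabs_zero)
  then show ?thesis using True by (simp add: in_lp_def)
next
  case qf: False
  define q' where "q' = real_of_ereal q"
  have q1: "q' \<ge> 1" using ereal_fin_cases[OF assms(1) qf] by (simp add: q'_def)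
  have su: "summable (\<lambda>n. \<bar>u n\<bar> powr q')" and sv: "summable (\<lambda>n. \<bar>v n\<bar> powr q')"
    using assms qf by (auto simp: in_lp_def q'_def)
  have "summable (\<lambda>n. 2 powr q' * (\<bar>u n\<bar> powr q' + \<bar>v n\<bar> powr q'))"
    by (intro summable_mult summable_add su sv)
  moreover have bnd: "\<And>n. norm (\<bar>\<bar>u n\<bar> + \<bar>v n\<bar>\<bar> powr q') \<le> 2 powr q' * (\<bar>u n\<bar> powr q' + \<bar>v n\<bar> powr q')"
  proof -
    fix n
    have e: "norm (\<bar>\<bar>u n\<bar> + \<bar>v n\<bar>\<bar> powr q') = (\<bar>u n\<bar> + \<bar>v n\<bar>) powr q'" by simp
    show "norm (\<bar>\<bar>u n\<bar> + \<bar>v n\<bar>\<bar> powr q') \<le> 2 powr q' * (\<bar>u n\<bar> powr q' + \<bar>v n\<bar> powr q')"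
      unfolding e by (rule powr_add_le) (use q1 in linarith)
  qed
  ultimately have "summable (\<lambda>n. \<bar>\<bar>u n\<bar> + \<bar>v n\<bar>\<bar> powr q')"
    by (rule summable_comparison_test')
  then show ?thesis using qf by (simp add: in_lp_def q'_def)
qed

lemma in_lp_zero: "in_lp q (\<lambda>n. 0)"
  by (simp add: in_lp_def)

lemma in_lp_sum:
  assumes "finite K" "1 \<le> q" "\<forall>x\<in>K. in_lp q (\<lambda>n. a n x)"
  shows "in_lp q (\<lambda>n. \<Sum>x\<in>K. \<bar>a n x\<bar>)"
  using assms(1,3)
proof (induction K rule: finite_induct)
  case empty then show ?case by (simp add: in_lp_zero)
next
  case (insert x F)
  have "in_lp q (\<lambda>n. \<bar>a n x\<bar> + \<bar>\<Sum>y\<in>F. \<bar>a n y\<bar>\<bar>)"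
  proof (rule in_lp_add[OF assms(2)])
    show "in_lp q (\<lambda>n. a n x)" using insert.prems by simp
    show "in_lp q (\<lambda>n. \<Sum>y\<in>F. \<bar>a n y\<bar>)" using insert.IH insert.prems by simp
  qed
  moreover have "(\<lambda>n. \<bar>a n x\<bar> + \<bar>\<Sum>y\<in>F. \<bar>a n y\<bar>\<bar>) = (\<lambda>n. \<Sum>y\<in>insert x F. \<bar>a n y\<bar>)"
  proof
    fix n
    have "\<bar>\<Sum>y\<in>F. \<bar>a n y\<bar>\<bar> = (\<Sum>y\<in>F. \<bar>a n y\<bar>)" by (intro abs_of_nonneg sum_nonneg) auto
    then show "\<bar>a n x\<bar> + \<bar>\<Sum>y\<in>F. \<bar>a n y\<bar>\<bar> = (\<Sum>y\<in>insert x F. \<bar>a n y\<bar>)"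
      using insert.hyps by simp
  qed
  ultimately show ?case by simp
qed

lemma in_lq_bound:
  assumes "1 \<le> q" "in_lp q b" "\<And>n. 0 \<le> s n" "\<And>n. s n \<le> ereal (b n)"
  shows "in_lq_ereal q s"
proof (cases "q = \<infinity>")
  case True
  then have "b \<longlonglongrightarrow> 0" using assms(2) by (simp add: in_lp_def)
  then have eb: "(\<lambda>n. ereal (b n)) \<longlonglongrightarrow> 0" using tendsto_ereal[of b 0] by (simp add: zero_ereal_def)
  have "s \<longlonglongrightarrow> 0"
    by (rule tendsto_sandwich[of "\<lambda>n. 0" _ _ "\<lambda>n. ereal (b n)"]) (use assms(3,4) eb in auto)
  then show ?thesis using True by (simp add: in_lq_ereal_def)
next
  case qf: False
  define q' where "q' = real_of_ereal q"
  have q1: "q' \<ge> 1" using ereal_fin_cases[OF assms(1) qf] by (simp add: q'_def)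
  have sb: "summable (\<lambda>n. \<bar>b n\<bar> powr q')" using assms(2) qf by (simp add: in_lp_def q'_def)
  have fin: "\<And>n. s n \<noteq> \<infinity>"
  proof -
    fix n show "s n \<noteq> \<infinity>" using assms(4)[of n] by (cases "s n") auto
  qed
  have r: "\<And>n. 0 \<le> real_of_ereal (s n) \<and> real_of_ereal (s n) \<le> b n"
  proof -
    fix n
    show "0 \<le> real_of_ereal (s n) \<and> real_of_ereal (s n) \<le> b n"
      using assms(3,4)[of n] fin[of n] by (cases "s n") auto
  qed
  have bnd: "\<And>n. norm (real_of_ereal (s n) powr q') \<le> \<bar>b n\<bar> powr q'"
  proof -
    fix n
    have "real_of_ereal (s n) powr q' \<le> \<bar>b n\<bar> powr q'"
      by (rule powr_mono2) (use r[of n] q1 in auto)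
    then show "norm (real_of_ereal (s n) powr q') \<le> \<bar>b n\<bar> powr q'" by simp
  qed
  then have "summable (\<lambda>n. real_of_ereal (s n) powr q')"
    by (rule summable_comparison_test'[OF sb])
  then show ?thesis using qf fin by (simp add: in_lq_ereal_def q'_def)
qed

lemma geo_lp:
  assumes "1 \<le> p"
  shows "in_lp p (\<lambda>n. (1/2)^n * c)"
proof (cases "p = \<infinity>")
  case True
  have "(\<lambda>n. (1/2::real)^n) \<longlonglongrightarrow> 0" by (rule LIMSEQ_realpow_zero) auto
  then have "(\<lambda>n. (1/2::real)^n * c) \<longlonglongrightarrow> 0" by (rule tendsto_mult_left_zero)
  then show ?thesis using True by (simp add: in_lp_def)
next
  case pf: False
  define p' where "p' = real_of_ereal p"
  have p1: "p' \<ge> 1" using ereal_fin_cases[OF assms pf] by (simp add: p'_def)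
  have h: "(1/2::real) powr p' \<le> 1/2" by (rule powr_le_one_le) (use p1 in auto)
  have "summable (\<lambda>n. ((1/2::real) powr p')^n)"
    by (rule summable_geometric) (use h in simp)
  then have "summable (\<lambda>n. ((1/2::real) powr p')^n * \<bar>c\<bar> powr p')" by (rule summable_mult2)
  moreover have "\<And>n. \<bar>(1/2)^n * c\<bar> powr p' = ((1/2::real) powr p')^n * \<bar>c\<bar> powr p'"
  proof -
    fix n
    have "\<bar>(1/2::real)^n * c\<bar> powr p' = ((1/2::real)^n) powr p' * \<bar>c\<bar> powr p'"
      by (simp add: abs_mult powr_mult)
    also have "((1/2::real)^n) powr p' = ((1/2::real) powr p')^n"
    proof -
      have "((1/2::real)^n) powr p' = ((1/2::real) powr (real n)) powr p'"
        by (subst powr_realpow) auto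
      also have "\<dots> = (1/2::real) powr (real n * p')" by (rule powr_powr)
      also have "\<dots> = ((1/2::real) powr p')^n" by (rule powr_power[symmetric]) simp
      finally show ?thesis .
    qed
    finally show "\<bar>(1/2)^n * c\<bar> powr p' = ((1/2::real) powr p')^n * \<bar>c\<bar> powr p'" .
  qed
  ultimately show ?thesis using pf by (simp add: in_lp_def p'_def)
qed


lemma Cp_eq: "Cp X = subtopology euclidean (CS X)"
  by (simp add: Cp_def CS_def)

definition ip :: "'a topology \<Rightarrow> 'a set \<Rightarrow> 'a \<Rightarrow> 'a \<Rightarrow> real" where
  "ip X K x = (SOME e. e \<in> CS X \<and> e x = 1 \<and> (\<forall>y\<in>K-{x}. e y = 0) \<and> (\<forall>y. 0 \<le> e y \<and> e y \<le> 1))"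

lemma ip:
  assumes "tychonoff_space X" "finite K" "K \<subseteq> topspace X" "x \<in> topspace X"
  shows "ip X K x \<in> CS X \<and> ip X K x x = 1 \<and> (\<forall>y\<in>K-{x}. ip X K x y = 0) \<and> (\<forall>y. 0 \<le> ip X K x y \<and> ip X K x y \<le> 1)"
proof -
  have "\<exists>e. e \<in> CS X \<and> e x = 1 \<and> (\<forall>y\<in>K-{x}. e y = 0) \<and> (\<forall>y. 0 \<le> e y \<and> e y \<le> 1)"
    using interp[OF assms] by blast
  from someI_ex[OF this] show ?thesis unfolding ip_def .
qed

definition lin_on :: "'a topology \<Rightarrow> (('a\<Rightarrow>real) \<Rightarrow> real) \<Rightarrow> bool" where
  "lin_on X \<phi> \<longleftrightarrow> (\<forall>f\<in>CS X. \<forall>g\<in>CS X. \<phi> (f+g) = \<phi> f + \<phi> g) \<and> (\<forall>c. \<forall>f\<in>CS X. \<phi> (c *\<^sub>R f) = c * \<phi> f)"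

lemma dual_lin: "\<phi> \<in> dual_space (Cp X) \<Longrightarrow> lin_on X \<phi>"
  by (simp add: dual_space_def lin_on_def topspace_Cp)

lemma lin_add: "lin_on X \<phi> \<Longrightarrow> f \<in> CS X \<Longrightarrow> g \<in> CS X \<Longrightarrow> \<phi> (f+g) = \<phi> f + \<phi> g"
  by (simp add: lin_on_def)

lemma lin_scale: "lin_on X \<phi> \<Longrightarrow> f \<in> CS X \<Longrightarrow> \<phi> (c *\<^sub>R f) = c * \<phi> f"
  by (simp add: lin_on_def)

lemma lin_0: "lin_on X \<phi> \<Longrightarrow> \<phi> 0 = 0"
proof -
  assume l: "lin_on X \<phi>"
  have "\<phi> (0 *\<^sub>R (0::'a\<Rightarrow>real)) = 0 * \<phi> 0" by (rule lin_scale[OF l CS_0])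
  then show ?thesis by simp
qed

lemma lin_diff: "lin_on X \<phi> \<Longrightarrow> f \<in> CS X \<Longrightarrow> g \<in> CS X \<Longrightarrow> \<phi> (f - g) = \<phi> f - \<phi> g"
proof -
  assume l: "lin_on X \<phi>" and f: "f \<in> CS X" and g: "g \<in> CS X"
  have e: "f + (-1) *\<^sub>R g = f - g" by simp
  have "\<phi> (f + (-1) *\<^sub>R g) = \<phi> f + \<phi> ((-1) *\<^sub>R g)" by (rule lin_add[OF l f CS_scaleR[OF g]])
  also have "\<phi> ((-1) *\<^sub>R g) = (-1) * \<phi> g" by (rule lin_scale[OF l g])
  finally have "\<phi> (f + (-1) *\<^sub>R g) = \<phi> f + (-1) * \<phi> g" .
  then show ?thesis unfolding e by linarith
qed

lemma lin_sum: "lin_on X \<phi> \<Longrightarrow> (\<And>i. i \<in> I \<Longrightarrow> f i \<in> CS X) \<Longrightarrow> \<phi> (sum f I) = (\<Sum>i\<in>I. \<phi> (f i))"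
proof (induction I rule: infinite_finite_induct)
  case (infinite A)
  have "sum f A = 0" using infinite.hyps by simp
  then show ?case unfolding \<open>sum f A = 0\<close> using lin_0[OF infinite.prems(1)] infinite.hyps by (simp only: sum.infinite[OF infinite.hyps])
next
  case empty then show ?case unfolding sum.empty using lin_0 by blast
next
  case (insert x F)
  have "\<phi> (sum f (insert x F)) = \<phi> (f x + sum f F)" by (simp only: sum.insert[OF insert.hyps])
  also have "\<dots> = \<phi> (f x) + \<phi> (sum f F)"
    by (rule lin_add) (use insert.prems in \<open>auto intro!: CS_sum\<close>)
  also have "\<phi> (sum f F) = (\<Sum>i\<in>F. \<phi> (f i))" using insert.IH insert.prems by blast
  also have "\<phi> (f x) + (\<Sum>i\<in>F. \<phi> (f i)) = (\<Sum>i\<in>insert x F. \<phi> (f i))"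
    by (simp only: sum.insert[OF insert.hyps])
  finally show ?case .
qed

lemma rep:
  assumes ty: "tychonoff_space X" and K: "finite K" "K \<subseteq> topspace X" and d: "\<delta> > 0"
    and lin: "lin_on X \<phi>"
    and bnd: "\<forall>h\<in>CS X. (\<forall>x\<in>K. \<bar>h x\<bar> < \<delta>) \<longrightarrow> \<bar>\<phi> h\<bar> \<le> 1"
    and g: "g \<in> CS X"
  shows "\<phi> g = (\<Sum>x\<in>K. g x * \<phi> (ip X K x))"
proof -
  have van: "\<phi> h = 0" if h: "h \<in> CS X" "\<forall>x\<in>K. h x = 0" for h
  proof (rule ccontr)
    assume ne: "\<phi> h \<noteq> 0"
    define c where "c = 2 / \<bar>\<phi> h\<bar>"
    have "c *\<^sub>R h \<in> CS X" using h(1) by (rule CS_scaleR)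
    moreover have "\<forall>x\<in>K. \<bar>(c *\<^sub>R h) x\<bar> < \<delta>" using h(2) d by (simp add: scaleR_fun_def)
    ultimately have "\<bar>\<phi> (c *\<^sub>R h)\<bar> \<le> 1" using bnd by blast
    moreover have "\<phi> (c *\<^sub>R h) = c * \<phi> h" using lin_scale[OF lin h(1)] .
    moreover have "\<bar>c * \<phi> h\<bar> = 2" using ne by (simp add: c_def abs_mult)
    ultimately show False by simp
  qed
  have ipK: "\<And>x. x \<in> K \<Longrightarrow> ip X K x \<in> CS X \<and> ip X K x x = 1 \<and> (\<forall>y\<in>K-{x}. ip X K x y = 0)"
    using ip[OF ty K] K(2) by blast
  define s where "s = (\<Sum>x\<in>K. g x *\<^sub>R ip X K x)"
  have sC: "s \<in> CS X" unfolding s_def by (rule CS_sum) (use ipK in \<open>auto intro: CS_scaleR\<close>)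
  have sy: "s y = g y" if y: "y \<in> K" for y
  proof -
    have "s y = (\<Sum>x\<in>K. g x * ip X K x y)" by (simp add: s_def sum_fun_apply scaleR_fun_def)
    also have "\<dots> = g y * ip X K y y + (\<Sum>x\<in>K-{y}. g x * ip X K x y)"
      using K(1) y by (simp add: sum.remove)
    also have "(\<Sum>x\<in>K-{y}. g x * ip X K x y) = 0"
      by (rule sum.neutral) (use ipK y in auto)
    finally show ?thesis using ipK[OF y] by simp
  qed
  have "\<phi> (g - s) = 0"
    by (rule van) (use CS_diff[OF g sC] sy in \<open>auto simp: fun_diff_def\<close>)
  then have "\<phi> g = \<phi> s" using lin_diff[OF lin g sC] by simp
  also have "\<phi> s = (\<Sum>x\<in>K. \<phi> (g x *\<^sub>R ip X K x))"
    unfolding s_def by (rule lin_sum[OF lin]) (use ipK in \<open>auto intro: CS_scaleR\<close>)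
  also have "\<dots> = (\<Sum>x\<in>K. g x * \<phi> (ip X K x))"
    by (rule sum.cong) (use ipK lin_scale[OF lin] in auto)
  finally show ?thesis .
qed

lemma dual_bnd:
  assumes "\<phi> \<in> dual_space (Cp X)"
  shows "\<exists>K \<delta>. finite K \<and> K \<subseteq> topspace X \<and> \<delta> > 0 \<and> (\<forall>h\<in>CS X. (\<forall>x\<in>K. \<bar>h x\<bar> < \<delta>) \<longrightarrow> \<bar>\<phi> h\<bar> \<le> 1)"
proof -
  have c: "continuous_map (Cp X) euclideanreal \<phi>" using assms by (simp add: dual_space_def)
  have op: "openin (Cp X) {h \<in> topspace (Cp X). \<phi> h \<in> {-1<..<1}}"
    by (rule openin_continuous_map_preimage[OF c]) simp
  have "0 \<in> {h \<in> topspace (Cp X). \<phi> h \<in> {-1<..<1}}"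
    using lin_0[OF dual_lin[OF assms]] CS_0 by (simp add: topspace_Cp)
  from openin_Cp_basic[OF op this] obtain K \<delta> where
    K: "finite K" "K \<subseteq> topspace X" "\<delta> > 0"
       "{h \<in> CS X. \<forall>x\<in>K. \<bar>h x - 0 x\<bar> < \<delta>} \<subseteq> {h \<in> topspace (Cp X). \<phi> h \<in> {-1<..<1}}"
    by blast
  have "\<forall>h\<in>CS X. (\<forall>x\<in>K. \<bar>h x\<bar> < \<delta>) \<longrightarrow> \<bar>\<phi> h\<bar> \<le> 1"
  proof clarify
    fix h assume h: "h \<in> CS X" "\<forall>x\<in>K. \<bar>h x\<bar> < \<delta>"
    then have "h \<in> {h \<in> CS X. \<forall>x\<in>K. \<bar>h x - 0 x\<bar> < \<delta>}" by simp
    then have "\<phi> h \<in> {-1<..<1}" using K(4) by blast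
    then show "\<bar>\<phi> h\<bar> \<le> 1" by auto
  qed
  with K(1-3) show ?thesis by blast
qed

lemma equi_bnd:
  assumes "equicontinuous_set (Cp X) (range \<phi>)"
  shows "\<exists>K \<delta>. finite K \<and> K \<subseteq> topspace X \<and> \<delta> > 0 \<and> (\<forall>n. \<forall>h\<in>CS X. (\<forall>x\<in>K. \<bar>h x\<bar> < \<delta>) \<longrightarrow> \<bar>\<phi> n h\<bar> \<le> 1)"
proof -
  obtain U where U: "openin (Cp X) U" "0 \<in> U" "\<forall>\<psi>\<in>range \<phi>. \<forall>x\<in>U. \<bar>\<psi> x\<bar> \<le> 1"
    using assms unfolding equicontinuous_set_def by (meson zero_less_one)
  from openin_Cp_basic[OF U(1,2)] obtain K \<delta> where
    K: "finite K" "K \<subseteq> topspace X" "\<delta> > 0" "{h \<in> CS X. \<forall>x\<in>K. \<bar>h x - 0 x\<bar> < \<delta>} \<subseteq> U"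
    by blast
  have "\<forall>n. \<forall>h\<in>CS X. (\<forall>x\<in>K. \<bar>h x\<bar> < \<delta>) \<longrightarrow> \<bar>\<phi> n h\<bar> \<le> 1"
  proof clarify
    fix n h assume h: "h \<in> CS X" "\<forall>x\<in>K. \<bar>h x\<bar> < \<delta>"
    then have "h \<in> U" using K(4) by auto
    then show "\<bar>\<phi> n h\<bar> \<le> 1" using U(3) by blast
  qed
  with K(1-3) show ?thesis by blast
qed

definition ev :: "'a topology \<Rightarrow> 'a \<Rightarrow> real \<Rightarrow> ('a \<Rightarrow> real) \<Rightarrow> real" where
  "ev X x c = (\<lambda>f. if f \<in> CS X then c * f x else 0)"

lemma proj_cont: "continuous_map euclidean euclideanreal (\<lambda>f::'a\<Rightarrow>real. f x)"
  using continuous_map_product_projection[of x UNIV "\<lambda>i. euclideanreal"]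
  by (simp add: euclidean_product_topology)

lemma ev_dual: "ev X x c \<in> dual_space (Cp X)"
proof -
  have "continuous_map (Cp X) euclideanreal (\<lambda>f. c * f x)"
    unfolding Cp_eq
    by (intro continuous_map_real_mult_left continuous_map_from_subtopology proj_cont)
  then have "continuous_map (Cp X) euclideanreal (ev X x c)"
    by (rule continuous_map_eq) (simp add: ev_def topspace_Cp)
  moreover have "\<forall>f\<in>topspace (Cp X). \<forall>g\<in>topspace (Cp X). ev X x c (f + g) = ev X x c f + ev X x c g"
    by (auto simp: ev_def topspace_Cp CS_add algebra_simps)
  moreover have "\<forall>c'. \<forall>f\<in>topspace (Cp X). ev X x c (c' *\<^sub>R f) = c' * ev X x c f"
  proof (intro allI ballI)
    fix c' f assume f: "f \<in> topspace (Cp X)"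
    then have "c' *\<^sub>R f \<in> CS X" by (simp add: topspace_Cp CS_scaleR)
    then show "ev X x c (c' *\<^sub>R f) = c' * ev X x c f" using f by (simp add: ev_def topspace_Cp scaleR_fun_def)
  qed
  moreover have "\<forall>f. f \<notin> topspace (Cp X) \<longrightarrow> ev X x c f = 0" by (simp add: ev_def topspace_Cp)
  ultimately show ?thesis by (simp add: dual_space_def)
qed

lemma Elim_bounded:
  assumes p: "1 \<le> p" and A: "pq_E_limited p q (Cp X) A" and x: "x \<in> topspace X"
  shows "\<exists>M. \<forall>f\<in>A. \<bar>f x\<bar> \<le> M"
proof (rule ccontr)
  assume nb: "\<not> ?thesis"
  define \<phi> where "\<phi> n = ev X x ((1/2)^n)" for n :: nat
  have AC: "A \<subseteq> CS X" using A by (simp add: pq_E_limited_def topspace_Cp)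
  have ws: "weak_star_summable p (Cp X) \<phi>"
    unfolding weak_star_summable_def
  proof (intro conjI allI ballI)
    fix n show "\<phi> n \<in> dual_space (Cp X)" by (simp add: \<phi>_def ev_dual)
  next
    fix g assume "g \<in> topspace (Cp X)"
    then have "(\<lambda>n. \<phi> n g) = (\<lambda>n. (1/2)^n * g x)" by (simp add: \<phi>_def ev_def topspace_Cp)
    then show "in_lp p (\<lambda>n. \<phi> n g)" using geo_lp[OF p] by simp
  qed
  have eq: "equicontinuous_set (Cp X) (range \<phi>)"
    unfolding equicontinuous_set_def
  proof (intro allI impI)
    fix \<epsilon> :: real assume e: "\<epsilon> > 0"
    define U where "U = {h \<in> CS X. \<forall>y\<in>{x}. \<bar>h y - 0 y\<bar> < \<epsilon>}"
    have "openin (Cp X) U" unfolding U_def by (rule openin_Cp_finite_nbhd) simp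
    moreover have "0 \<in> U" using e CS_0 by (simp add: U_def)
    moreover have "\<forall>\<psi>\<in>range \<phi>. \<forall>h\<in>U. \<bar>\<psi> h\<bar> \<le> \<epsilon>"
    proof clarify
      fix n h assume h: "h \<in> U"
      have "\<bar>\<phi> n h\<bar> = (1/2)^n * \<bar>h x\<bar>" using h by (simp add: U_def \<phi>_def ev_def abs_mult)
      also have "\<dots> \<le> 1 * \<bar>h x\<bar>" by (intro mult_right_mono) (auto simp: power_le_one)
      also have "\<dots> \<le> \<epsilon>" using h by (simp add: U_def)
      finally show "\<bar>\<phi> n h\<bar> \<le> \<epsilon>" .
    qed
    ultimately show "\<exists>U. openin (Cp X) U \<and> 0 \<in> U \<and> (\<forall>\<psi>\<in>range \<phi>. \<forall>h\<in>U. \<bar>\<psi> h\<bar> \<le> \<epsilon>)" by blast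
  qed
  have lq: "in_lq_ereal q (\<lambda>n. norm_on A (\<phi> n))" using A ws eq by (simp add: pq_E_limited_def)
  have inf: "norm_on A (\<phi> n) = \<infinity>" for n
    unfolding norm_on_def
  proof (rule SUP_PInfty)
    fix m :: nat
    obtain f where f: "f \<in> A" "\<bar>f x\<bar> > real m * 2^n" using nb by (meson not_le)
    have "\<bar>\<phi> n f\<bar> = (1/2)^n * \<bar>f x\<bar>" using f(1) AC by (auto simp: \<phi>_def ev_def abs_mult)
    also have "(1/2::real)^n * \<bar>f x\<bar> \<ge> (1/2)^n * (real m * 2^n)" using f(2) by simp
    also have "(1/2::real)^n * (real m * 2^n) = real m" by (simp add: power_one_over field_simps)
    finally have "real m \<le> \<bar>\<phi> n f\<bar>" .
    then show "\<exists>f\<in>A \<union> {0}. ereal (real m) \<le> ereal \<bar>\<phi> n f\<bar>" using f(1) by auto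
  qed
  show False
  proof (cases "q = \<infinity>")
    case True
    then have "(\<lambda>n. \<infinity>::ereal) \<longlonglongrightarrow> 0" using lq inf by (simp add: in_lq_ereal_def)
    then have "(\<infinity>::ereal) = 0" using LIMSEQ_unique tendsto_const by blast
    then show False by simp
  next
    case False then show False using lq inf by (simp add: in_lq_ereal_def)
  qed
qed

lemma norm_on_nonneg: "0 \<le> norm_on A \<phi>"
  unfolding norm_on_def by (rule SUP_upper2[of 0]) auto

lemma ball_Elim:
  assumes ty: "tychonoff_space X" and pq: "1 \<le> p" "p \<le> q"
    and A: "A \<subseteq> CS X" "A \<noteq> {}" "\<forall>f\<in>A. \<forall>y. \<bar>f y\<bar> \<le> 1"
  shows "pq_E_limited p q (Cp X) A"
  unfolding pq_E_limited_def
proof (intro conjI allI impI)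
  show "A \<noteq> {}" "A \<subseteq> topspace (Cp X)" using A by (auto simp: topspace_Cp)
next
  fix \<phi> assume h: "weak_star_summable p (Cp X) \<phi> \<and> equicontinuous_set (Cp X) (range \<phi>)"
  then have ws: "\<And>n. \<phi> n \<in> dual_space (Cp X)" "\<And>g. g \<in> CS X \<Longrightarrow> in_lp p (\<lambda>n. \<phi> n g)"
    by (auto simp: weak_star_summable_def topspace_Cp)
  obtain K \<delta> where K: "finite K" "K \<subseteq> topspace X" "\<delta> > 0"
    "\<forall>n. \<forall>h\<in>CS X. (\<forall>x\<in>K. \<bar>h x\<bar> < \<delta>) \<longrightarrow> \<bar>\<phi> n h\<bar> \<le> 1"
    using equi_bnd[OF conjunct2[OF h]] by blast
  have rp: "\<phi> n g = (\<Sum>x\<in>K. g x * \<phi> n (ip X K x))" if "g \<in> CS X" for n g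
    by (rule rep[OF ty K(1-3) dual_lin[OF ws(1)]]) (use K(4) that in auto)
  have ipC: "\<And>x. x \<in> K \<Longrightarrow> ip X K x \<in> CS X" using ip[OF ty K(1,2)] K(2) by blast
  define b where "b n = (\<Sum>x\<in>K. \<bar>\<phi> n (ip X K x)\<bar>)" for n
  have "in_lp q b"
    unfolding b_def
  proof (rule in_lp_sum[OF K(1)])
    show "1 \<le> q" using pq by (rule order_trans)
    show "\<forall>x\<in>K. in_lp q (\<lambda>n. \<phi> n (ip X K x))"
      using in_lp_mono[OF pq] ws(2) ipC by blast
  qed
  moreover have "norm_on A (\<phi> n) \<le> ereal (b n)" for n
    unfolding norm_on_def
  proof (rule SUP_least)
    fix f assume f: "f \<in> A \<union> {0}"
    then have fC: "f \<in> CS X" and fb: "\<And>y. \<bar>f y\<bar> \<le> 1" using A CS_0 by auto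
    have "\<bar>\<phi> n f\<bar> = \<bar>\<Sum>x\<in>K. f x * \<phi> n (ip X K x)\<bar>" using rp[OF fC] by simp
    also have "\<dots> \<le> (\<Sum>x\<in>K. \<bar>f x * \<phi> n (ip X K x)\<bar>)" by (rule sum_abs)
    also have "\<dots> \<le> b n" unfolding b_def
    proof (rule sum_mono)
      fix x assume "x \<in> K"
      have "\<bar>f x * \<phi> n (ip X K x)\<bar> = \<bar>f x\<bar> * \<bar>\<phi> n (ip X K x)\<bar>" by (simp add: abs_mult)
      also have "\<dots> \<le> 1 * \<bar>\<phi> n (ip X K x)\<bar>" by (intro mult_right_mono fb) simp
      finally show "\<bar>f x * \<phi> n (ip X K x)\<bar> \<le> \<bar>\<phi> n (ip X K x)\<bar>" by simp
    qed
    finally show "ereal \<bar>\<phi> n f\<bar> \<le> ereal (b n)" by simp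
  qed
  ultimately show "in_lq_ereal q (\<lambda>n. norm_on A (\<phi> n))"
    using in_lq_bound[of q b] norm_on_nonneg pq by (meson order_trans)
qed


lemma common_bound:
  assumes "finite S" "\<forall>x\<in>S. \<exists>M. \<forall>f\<in>A. \<bar>f x\<bar> \<le> M"
  shows "\<exists>M. \<forall>x\<in>S. \<forall>f\<in>A. \<bar>(f::'a\<Rightarrow>real) x\<bar> \<le> M"
proof -
  obtain Mf where Mf: "\<forall>x\<in>S. \<forall>f\<in>A. \<bar>f x\<bar> \<le> Mf x" using bchoice[OF assms(2)] by blast
  have "\<forall>x\<in>S. \<forall>f\<in>A. \<bar>f x\<bar> \<le> (\<Sum>y\<in>S. \<bar>Mf y\<bar>)"
  proof clarify
    fix x f assume x: "x \<in> S" and f: "f \<in> A"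
    have "\<bar>f x\<bar> \<le> Mf x" using Mf x f by blast
    also have "\<dots> \<le> \<bar>Mf x\<bar>" by simp
    also have "\<dots> \<le> (\<Sum>y\<in>S. \<bar>Mf y\<bar>)" by (rule member_le_sum) (use x assms(1) in auto)
    finally show "\<bar>f x\<bar> \<le> (\<Sum>y\<in>S. \<bar>Mf y\<bar>)" .
  qed
  then show ?thesis by blast
qed

lemma grid_cover:
  assumes ty: "tychonoff_space X" and S: "finite S" "S \<subseteq> topspace X" and d: "\<delta> > 0"
    and A: "A \<subseteq> CS X" and bd: "\<forall>x\<in>S. \<exists>M. \<forall>f\<in>A. \<bar>f x\<bar> \<le> M"
  shows "\<exists>F. finite F \<and> F \<subseteq> CS X \<and> A \<subseteq> (\<Union>f\<in>F. (\<lambda>u. f + u) ` {u \<in> CS X. \<forall>x\<in>S. \<bar>u x\<bar> < \<delta>})"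
proof -
  obtain M where M: "\<forall>x\<in>S. \<forall>f\<in>A. \<bar>f x\<bar> \<le> M" using common_bound[OF S(1) bd] by blast
  define h where "h = \<delta> / 2"
  have h: "h > 0" using d by (simp add: h_def)
  define N where "N = \<lceil>M / h\<rceil> + 1"
  define k where "k f x = \<lfloor>f x / h\<rfloor>" for f :: "'a \<Rightarrow> real" and x
  define w where "w f = (\<lambda>x\<in>S. k f x)" for f
  define G where "G w = (\<Sum>x\<in>S. (h * of_int (w x)) *\<^sub>R ip X S x)" for w :: "'a \<Rightarrow> int"
  have ipS: "\<And>x. x \<in> S \<Longrightarrow> ip X S x \<in> CS X \<and> ip X S x x = 1 \<and> (\<forall>y\<in>S-{x}. ip X S x y = 0)"
    using ip[OF ty S] S(2) by blast
  have GC: "G w \<in> CS X" for w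
    unfolding G_def by (rule CS_sum) (use ipS in \<open>auto intro: CS_scaleR\<close>)
  have Gy: "G w y = h * of_int (w y)" if y: "y \<in> S" for w y
  proof -
    have "G w y = (\<Sum>x\<in>S. h * of_int (w x) * ip X S x y)" by (simp add: G_def sum_fun_apply scaleR_fun_def)
    also have "\<dots> = h * of_int (w y) * ip X S y y + (\<Sum>x\<in>S-{y}. h * of_int (w x) * ip X S x y)"
      using S(1) y by (simp add: sum.remove)
    also have "(\<Sum>x\<in>S-{y}. h * of_int (w x) * ip X S x y) = 0"
      by (rule sum.neutral) (use ipS y in auto)
    finally show ?thesis using ipS[OF y] by simp
  qed
  have kb: "k f x \<in> {-N..N}" if "f \<in> A" "x \<in> S" for f x
  proof -
    have fx: "\<bar>f x\<bar> \<le> M" using M that by blast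
    then have "- M \<le> f x" "f x \<le> M" by (simp_all add: abs_le_iff)
    then have "- M / h \<le> f x / h" "f x / h \<le> M / h" using h
      by (metis divide_right_mono less_imp_le)+
    then have "- (M/h) \<le> f x / h" "f x / h \<le> M / h" by simp_all
    then have lo: "- (M/h) \<le> f x / h" and hi: "f x / h \<le> M / h" by simp_all
    have "k f x \<le> \<lfloor>M/h\<rfloor>" unfolding k_def using hi by (rule floor_mono)
    also have "\<lfloor>M/h\<rfloor> \<le> \<lceil>M/h\<rceil>" by (rule floor_le_ceiling)
    finally have u: "k f x \<le> \<lceil>M/h\<rceil>" .
    have a: "real_of_int (k f x) > f x / h - 1" unfolding k_def by (rule real_of_int_floor_gt_diff_one)
    have b: "M/h \<le> real_of_int \<lceil>M/h\<rceil>" by (rule le_of_int_ceiling)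
    have "- real_of_int \<lceil>M/h\<rceil> - 2 < real_of_int (k f x)" using a b lo by linarith
    then have "real_of_int (k f x) > real_of_int (- \<lceil>M/h\<rceil> - 2)" by simp
    then have "k f x > - \<lceil>M/h\<rceil> - 2" by (simp only: of_int_less_iff)
    then have "k f x \<ge> - \<lceil>M/h\<rceil> - 1" by simp
    with u have "k f x \<le> \<lceil>M/h\<rceil>" "k f x \<ge> - \<lceil>M/h\<rceil> - 1" by simp_all
    then show ?thesis by (simp add: N_def)
  qed
  define F where "F = G ` (w ` A)"
  have "w ` A \<subseteq> PiE S (\<lambda>_. {-N..N})"
    using kb by (auto simp: w_def PiE_iff)
  then have "finite (w ` A)" by (rule finite_subset) (intro finite_PiE S(1) finite_atLeastAtMost_int)
  then have fF: "finite F" by (simp add: F_def)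
  have FC: "F \<subseteq> CS X" using GC by (auto simp: F_def)
  have "A \<subseteq> (\<Union>f\<in>F. (\<lambda>u. f + u) ` {u \<in> CS X. \<forall>x\<in>S. \<bar>u x\<bar> < \<delta>})"
  proof
    fix f assume f: "f \<in> A"
    let ?g = "G (w f)"
    have "f - ?g \<in> CS X" using CS_diff A f GC by blast
    moreover have "\<forall>x\<in>S. \<bar>(f - ?g) x\<bar> < \<delta>"
    proof
      fix x assume x: "x \<in> S"
      have e: "(f - ?g) x = f x - h * of_int \<lfloor>f x / h\<rfloor>"
        using Gy[OF x] x by (simp add: fun_diff_def w_def k_def)
      have "of_int \<lfloor>f x / h\<rfloor> \<le> f x / h" "f x / h < of_int \<lfloor>f x / h\<rfloor> + 1" by linarith+
      then have "h * of_int \<lfloor>f x / h\<rfloor> \<le> h * (f x / h)" "h * (f x / h) < h * (of_int \<lfloor>f x / h\<rfloor> + 1)"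
        using h by (intro mult_left_mono mult_strict_left_mono; simp)+
      then have "h * of_int \<lfloor>f x / h\<rfloor> \<le> f x" "f x < h * of_int \<lfloor>f x / h\<rfloor> + h"
        using h by (simp_all add: algebra_simps)
      then show "\<bar>(f - ?g) x\<bar> < \<delta>" unfolding e using h by (simp add: h_def)
    qed
    ultimately have "f - ?g \<in> {u \<in> CS X. \<forall>x\<in>S. \<bar>u x\<bar> < \<delta>}" by blast
    moreover have "f = ?g + (f - ?g)" by simp
    moreover have "?g \<in> F" using f by (simp add: F_def)
    ultimately show "f \<in> (\<Union>f\<in>F. (\<lambda>u. f + u) ` {u \<in> CS X. \<forall>x\<in>S. \<bar>u x\<bar> < \<delta>})" by blast
  qed
  with fF FC show ?thesis by blast
qed

lemma prEGP_Cp: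
  assumes ty: "tychonoff_space X" and p: "1 \<le> p"
  shows "prEGP p q (Cp X)"
  unfolding prEGP_def precompact_def
proof (intro allI impI)
  fix A U assume A: "pq_E_limited p q (Cp X) A" and U: "openin (Cp X) U \<and> 0 \<in> U"
  have AC: "A \<subseteq> CS X" using A by (simp add: pq_E_limited_def topspace_Cp)
  obtain K \<delta> where K: "finite K" "K \<subseteq> topspace X" "\<delta> > 0"
    "{h \<in> CS X. \<forall>x\<in>K. \<bar>h x - 0 x\<bar> < \<delta>} \<subseteq> U"
    using openin_Cp_basic[OF conjunct1[OF U] conjunct2[OF U]] by blast
  have bd: "\<forall>x\<in>K. \<exists>M. \<forall>f\<in>A. \<bar>f x\<bar> \<le> M" using Elim_bounded[OF p A] K(2) by blast
  obtain F where F: "finite F" "F \<subseteq> CS X"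
    "A \<subseteq> (\<Union>f\<in>F. (\<lambda>u. f + u) ` {u \<in> CS X. \<forall>x\<in>K. \<bar>u x\<bar> < \<delta>})"
    using grid_cover[OF ty K(1,2,3) AC bd] by blast
  have "{u \<in> CS X. \<forall>x\<in>K. \<bar>u x\<bar> < \<delta>} \<subseteq> U" using K(4) by simp
  then have "A \<subseteq> (\<Union>f\<in>F. (\<lambda>u. f + u) ` U)" using F(3) by blast
  then show "\<exists>F. finite F \<and> F \<subseteq> topspace (Cp X) \<and> A \<subseteq> (\<Union>f\<in>F. (\<lambda>u. f + u) ` U)"
    using F(1,2) by (intro exI[of _ F]) (simp add: topspace_Cp)
qed

lemma limited_E: "pq_limited p q T A \<Longrightarrow> pq_E_limited p q T A"
  by (simp add: pq_limited_def pq_E_limited_def)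

lemma prGP_Cp:
  assumes ty: "tychonoff_space X" and p: "1 \<le> p"
  shows "prGP p q (Cp X)"
  unfolding prGP_def using prEGP_Cp[OF assms, of q] limited_E unfolding prEGP_def by blast


lemma Hausdorff_fun: "Hausdorff_space (euclidean :: ('a \<Rightarrow> real) topology)"
proof -
  have "Hausdorff_space (product_topology (\<lambda>i::'a. euclideanreal) UNIV)"
    by (simp add: Hausdorff_space_product_topology)
  then show ?thesis by (simp add: euclidean_product_topology)
qed

lemma discrete_EGP:
  assumes ty: "tychonoff_space X" and p: "1 \<le> p" and dis: "X = discrete_topology (topspace X)"
  shows "EGP p q (Cp X)"
  unfolding EGP_def relatively_compact_def
proof (intro allI impI)
  fix A assume A: "pq_E_limited p q (Cp X) A"
  have AC: "A \<subseteq> CS X" using A by (simp add: pq_E_limited_def topspace_Cp)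
  have bd: "\<forall>x\<in>topspace X. \<exists>M. \<forall>f\<in>A. \<bar>f x\<bar> \<le> M" using Elim_bounded[OF p A] by blast
  define M where "M x = (SOME M. \<forall>f\<in>A. \<bar>f x\<bar> \<le> M)" for x
  have Mx: "\<forall>f\<in>A. \<bar>f x\<bar> \<le> M x" if "x \<in> topspace X" for x
    unfolding M_def by (rule someI_ex) (use bd that in blast)
  define B where "B x = (if x \<in> topspace X then {-\<bar>M x\<bar>..\<bar>M x\<bar>} else {0::real})" for x
  define P where "P = PiE UNIV B"
  have Pc: "compactin euclidean P"
  proof -
    have "compactin (product_topology (\<lambda>i. euclideanreal) UNIV) P"
      unfolding P_def by (subst compactin_PiE) (auto simp: B_def)
    then show ?thesis by (simp add: euclidean_product_topology)
  qed
  have Pcl: "closedin euclidean P"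
  proof -
    have "closedin (product_topology (\<lambda>i. euclideanreal) UNIV) P"
      unfolding P_def by (subst closedin_product_topology) (auto simp: B_def)
    then show ?thesis by (simp add: euclidean_product_topology)
  qed
  have PC: "P \<subseteq> CS X"
  proof
    fix f assume f: "f \<in> P"
    have "continuous_map X euclideanreal f" by (subst dis) simp
    moreover have "\<forall>x. x \<notin> topspace X \<longrightarrow> f x = 0"
    proof (intro allI impI)
      fix x assume x: "x \<notin> topspace X"
      have "f x \<in> B x" using f by (simp add: P_def PiE_iff)
      then show "f x = 0" using x by (simp add: B_def)
    qed
    ultimately show "f \<in> CS X" by (simp add: CS_def)
  qed
  have AP: "A \<subseteq> P"
  proof
    fix f assume f: "f \<in> A"
    have "f x \<in> B x" for x
    proof (cases "x \<in> topspace X")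
      case True
      then have "\<bar>f x\<bar> \<le> M x" using Mx f by blast
      then show ?thesis using True by (auto simp: B_def abs_le_iff)
    next
      case False then show ?thesis using AC f by (auto simp: B_def CS_def)
    qed
    then show "f \<in> P" by (simp add: P_def PiE_iff)
  qed
  have cl: "euclidean closure_of A \<subseteq> P" by (rule closure_of_minimal[OF AP Pcl])
  have "Cp X closure_of A = CS X \<inter> euclidean closure_of A"
    unfolding Cp_eq closure_of_subtopology using AC by (simp add: Int_absorb1)
  also have "\<dots> = euclidean closure_of A" using cl PC by blast
  finally have e: "Cp X closure_of A = euclidean closure_of A" .
  have "compactin euclidean (euclidean closure_of A)"
    by (rule closed_compactin[OF Pc cl]) simp
  then show "compactin (Cp X) (Cp X closure_of A)"
    unfolding e unfolding Cp_eq compactin_subtopology using cl PC by blast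
qed

lemma EGP_discrete:
  assumes ty: "tychonoff_space X" and pq: "1 \<le> p" "p \<le> q" and E: "EGP p q (Cp X)"
  shows "X = discrete_topology (topspace X)"
proof (rule ccontr)
  assume "X \<noteq> discrete_topology (topspace X)"
  then obtain x0 where x0: "x0 \<in> topspace X" "\<not> openin X {x0}"
    using discrete_topology_unique[of "topspace X" X] by metis
  define A where "A = {g \<in> CS X. \<forall>y. \<bar>g y\<bar> \<le> 1}"
  have "0 \<in> A" using CS_0 by (simp add: A_def)
  then have "pq_E_limited p q (Cp X) A"
    by (intro ball_Elim[OF ty pq]) (auto simp: A_def)
  then have cpt: "compactin (Cp X) (Cp X closure_of A)" using E by (simp add: EGP_def relatively_compact_def)
  have AC: "A \<subseteq> CS X" by (auto simp: A_def)
  have eqC: "Cp X closure_of A = CS X \<inter> euclidean closure_of A"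
    unfolding Cp_eq closure_of_subtopology using AC by (simp add: Int_absorb1)
  have "compactin euclidean (Cp X closure_of A)" using cpt unfolding Cp_eq compactin_subtopology by blast
  then have "closedin euclidean (Cp X closure_of A)" by (rule compactin_imp_closedin[OF Hausdorff_fun])
  moreover have "A \<subseteq> Cp X closure_of A"
    by (rule closure_of_subset) (simp add: topspace_Cp AC)
  ultimately have sub: "euclidean closure_of A \<subseteq> Cp X closure_of A"
    by (intro closure_of_minimal) auto
  define chi where "chi = (\<lambda>y. if y = x0 then 1 else (0::real))"
  have "chi \<in> euclidean closure_of A"
    unfolding in_closure_of
  proof (intro conjI allI impI)
    show "chi \<in> topspace euclidean" by simp
  next
    fix T assume T: "chi \<in> T \<and> openin euclidean T"
    then obtain K \<delta> where K: "finite K" "\<delta> > 0" "{h. \<forall>x\<in>K. \<bar>h x - chi x\<bar> < \<delta>} \<subseteq> T"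
      using open_fun_basic[of T chi] by auto
    define K' where "K' = insert x0 (K \<inter> topspace X)"
    have K': "finite K'" "K' \<subseteq> topspace X" using K(1) x0 by (auto simp: K'_def)
    define g where "g = ip X K' x0"
    have g: "g \<in> CS X" "g x0 = 1" "\<forall>y\<in>K'-{x0}. g y = 0" "\<forall>y. 0 \<le> g y \<and> g y \<le> 1"
      using ip[OF ty K' x0(1)] by (simp_all add: g_def)
    have "g \<in> A" using g by (auto simp: A_def)
    moreover have "\<forall>x\<in>K. \<bar>g x - chi x\<bar> < \<delta>"
    proof
      fix x assume x: "x \<in> K"
      have "g x = chi x"
      proof (cases "x = x0")
        case True then show ?thesis using g(2) by (simp add: chi_def)
      next
        case False
        show ?thesis
        proof (cases "x \<in> topspace X")
          case True then show ?thesis using False g(3) x by (auto simp: chi_def K'_def)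
        next
          case nt: False then show ?thesis using False g(1) by (simp add: chi_def CS_def)
        qed
      qed
      then show "\<bar>g x - chi x\<bar> < \<delta>" using K(2) by simp
    qed
    then have "g \<in> T" using K(3) by blast
    ultimately show "\<exists>y. y \<in> A \<and> y \<in> T" by blast
  qed
  then have "chi \<in> CS X" using sub eqC by blast
  then have c: "continuous_map X euclideanreal chi" by (simp add: CS_def)
  have "openin X {x \<in> topspace X. chi x \<in> {1/2<..}}"
    by (rule openin_continuous_map_preimage[OF c]) simp
  moreover have "{x \<in> topspace X. chi x \<in> {1/2<..}} = {x0}" using x0(1) by (auto simp: chi_def)
  ultimately show False using x0(2) by simp
qed


lemma bEGP_fb_finite:
  assumes ty: "tychonoff_space X" and pq: "1 \<le> p" "p \<le> q" and E: "bEGP p q (Cp X)"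
    and D: "functionally_bounded X D"
  shows "finite D"
proof (rule ccontr)
  assume inf: "infinite D"
  have Dt: "D \<subseteq> topspace X" using D by (simp add: functionally_bounded_def)
  define A where "A = {g \<in> CS X. \<forall>y. \<bar>g y\<bar> \<le> 1}"
  have "0 \<in> A" using CS_0 by (simp add: A_def)
  then have "pq_E_limited p q (Cp X) A"
    by (intro ball_Elim[OF ty pq]) (auto simp: A_def)
  then have sp: "strongly_precompact (Cp X) A" using E by (simp add: bEGP_def)
  define B where "B = (\<lambda>x. ev X x 1) ` D"
  have Bd: "B \<subseteq> dual_space (Cp X)" by (auto simp: B_def ev_dual)
  have Bb: "\<forall>g\<in>topspace (Cp X). bounded ((\<lambda>\<phi>. \<phi> g) ` B)"
  proof
    fix g assume g: "g \<in> topspace (Cp X)"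
    then have "(\<lambda>\<phi>. \<phi> g) ` B = g ` D" by (auto simp: B_def ev_def topspace_Cp image_image)
    moreover have "continuous_map X euclideanreal g" using g by (simp add: topspace_Cp CS_def)
    ultimately show "bounded ((\<lambda>\<phi>. \<phi> g) ` B)" using D by (simp add: functionally_bounded_def)
  qed
  obtain F where F: "finite F" "F \<subseteq> topspace (Cp X)"
    "A \<subseteq> (\<Union>f\<in>F. (\<lambda>u. f + u) ` {u\<in>topspace (Cp X). \<forall>\<phi>\<in>B. \<bar>\<phi> u\<bar> \<le> 1/3})"
  proof -
    have "\<forall>\<epsilon>>0. \<exists>F. finite F \<and> F \<subseteq> topspace (Cp X) \<and>
           A \<subseteq> (\<Union>f\<in>F. (\<lambda>u. f + u) ` {u\<in>topspace (Cp X). \<forall>\<phi>\<in>B. \<bar>\<phi> u\<bar> \<le> \<epsilon>})"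
      using sp Bd Bb unfolding strongly_precompact_def by blast
    then have "\<exists>F. finite F \<and> F \<subseteq> topspace (Cp X) \<and>
           A \<subseteq> (\<Union>f\<in>F. (\<lambda>u. f + u) ` {u\<in>topspace (Cp X). \<forall>\<phi>\<in>B. \<bar>\<phi> u\<bar> \<le> 1/3})"
      by (rule allE[where x="1/3"]) simp
    then show ?thesis using that by blast
  qed
  obtain D' where D': "finite D'" "card D' = Suc (card F)" "D' \<subseteq> D"
    using infinite_arbitrarily_large[OF inf] by blast
  have D't: "D' \<subseteq> topspace X" using D' Dt by blast
  define e where "e d = ip X D' d" for d
  have e: "\<And>d. d \<in> D' \<Longrightarrow> e d \<in> CS X \<and> e d d = 1 \<and> (\<forall>y\<in>D'-{d}. e d y = 0) \<and> (\<forall>y. 0 \<le> e d y \<and> e d y \<le> 1)"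
    unfolding e_def using ip[OF ty D'(1) D't] D't by blast
  have eA: "\<And>d. d \<in> D' \<Longrightarrow> e d \<in> A" using e by (auto simp: A_def)
  have "\<forall>d\<in>D'. \<exists>f\<in>F. \<exists>u. u \<in> CS X \<and> (\<forall>\<phi>\<in>B. \<bar>\<phi> u\<bar> \<le> 1/3) \<and> e d = f + u"
  proof
    fix d assume "d \<in> D'"
    then have "e d \<in> (\<Union>f\<in>F. (\<lambda>u. f + u) ` {u\<in>topspace (Cp X). \<forall>\<phi>\<in>B. \<bar>\<phi> u\<bar> \<le> 1/3})"
      using eA F(3) by blast
    then show "\<exists>f\<in>F. \<exists>u. u \<in> CS X \<and> (\<forall>\<phi>\<in>B. \<bar>\<phi> u\<bar> \<le> 1/3) \<and> e d = f + u"
      by (auto simp: topspace_Cp)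
  qed
  then obtain c where c: "\<forall>d\<in>D'. c d \<in> F \<and> (\<exists>u. u \<in> CS X \<and> (\<forall>\<phi>\<in>B. \<bar>\<phi> u\<bar> \<le> 1/3) \<and> e d = c d + u)"
    by metis
  have "\<not> inj_on c D'"
  proof
    assume "inj_on c D'"
    then have "card D' \<le> card F" by (rule card_inj_on_le) (use c F(1) in auto)
    then show False using D'(2) by simp
  qed
  then obtain d1 d2 where d: "d1 \<in> D'" "d2 \<in> D'" "d1 \<noteq> d2" "c d1 = c d2"
    by (auto simp: inj_on_def)
  obtain u1 where u1: "u1 \<in> CS X" "\<forall>\<phi>\<in>B. \<bar>\<phi> u1\<bar> \<le> 1/3" "e d1 = c d1 + u1" using c d(1) by blast
  obtain u2 where u2: "u2 \<in> CS X" "\<forall>\<phi>\<in>B. \<bar>\<phi> u2\<bar> \<le> 1/3" "e d2 = c d2 + u2" using c d(2) by blast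
  have evB: "ev X d1 1 \<in> B" using d(1) D' by (auto simp: B_def)
  have b1: "\<bar>u1 d1\<bar> \<le> 1/3" using u2 u1(2) evB u1(1) by (force simp: ev_def)
  have b2: "\<bar>u2 d1\<bar> \<le> 1/3" using u2(2) evB u2(1) by (force simp: ev_def)
  have "e d1 d1 = c d1 d1 + u1 d1" using u1(3) by (simp add: fun_eq_iff)
  moreover have "e d2 d1 = c d2 d1 + u2 d1" using u2(3) by (simp add: fun_eq_iff)
  moreover have "e d1 d1 = 1" using e d(1) by blast
  moreover have "e d2 d1 = 0" using e[OF d(2)] d by blast
  moreover have "c d2 d1 = c d1 d1" using d(4) by simp
  ultimately show False using b1 b2 by linarith
qed


primrec Tr :: "(nat \<Rightarrow> nat \<Rightarrow> real) \<Rightarrow> (nat \<Rightarrow> real) \<Rightarrow> nat \<Rightarrow> nat \<Rightarrow> real" where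
  "Tr \<alpha> \<gamma> 0 = (\<lambda>_. 0)"
| "Tr \<alpha> \<gamma> (Suc k) = (Tr \<alpha> \<gamma> k)(k := (real k + \<bar>\<Sum>j<k. Tr \<alpha> \<gamma> k j * \<alpha> k j\<bar>) / \<gamma> k)"

lemma Tr_stable: "j < k \<Longrightarrow> Tr \<alpha> \<gamma> k j = Tr \<alpha> \<gamma> (Suc j) j"
proof (induction k)
  case 0 then show ?case by simp
next
  case (Suc k)
  show ?case
  proof (cases "j = k")
    case True then show ?thesis by simp
  next
    case False
    then have "j < k" using Suc.prems by simp
    then show ?thesis using Suc.IH False by simp
  qed
qed

lemma rec_t: "\<exists>t. \<forall>k. t k = (real k + \<bar>\<Sum>j<k. t j * \<alpha> k j\<bar>) / \<gamma> k"
proof (rule exI[of _ "\<lambda>k. Tr \<alpha> \<gamma> (Suc k) k"], rule allI)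
  fix k
  have "Tr \<alpha> \<gamma> (Suc k) k = (real k + \<bar>\<Sum>j<k. Tr \<alpha> \<gamma> k j * \<alpha> k j\<bar>) / \<gamma> k"
    by (simp only: Tr.simps fun_upd_same)
  also have "(\<Sum>j<k. Tr \<alpha> \<gamma> k j * \<alpha> k j) = (\<Sum>j<k. Tr \<alpha> \<gamma> (Suc j) j * \<alpha> k j)"
    by (rule sum.cong[OF refl]) (metis Tr_stable lessThan_iff)
  finally show "(\<lambda>k. Tr \<alpha> \<gamma> (Suc k) k) k = (real k + \<bar>\<Sum>j<k. (\<lambda>k. Tr \<alpha> \<gamma> (Suc k) k) j * \<alpha> k j\<bar>) / \<gamma> k" by simp
qed

primrec Sq :: "(real \<Rightarrow> 'b) \<Rightarrow> ('b \<Rightarrow> real) \<Rightarrow> nat \<Rightarrow> 'b \<times> real" where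
  "Sq P m 0 = (P 0, m (P 0))"
| "Sq P m (Suc k) = (P (snd (Sq P m k) + 2), snd (Sq P m k) + m (P (snd (Sq P m k) + 2)))"

lemma rec_seq:
  fixes P :: "real \<Rightarrow> 'b" and m :: "'b \<Rightarrow> real"
  assumes m: "\<And>b. m b \<ge> 0"
  shows "\<exists>z R. (\<forall>k. m (z k) \<le> R k) \<and> (\<forall>k. z (Suc k) = P (R k + 2)) \<and> (\<forall>j k. j \<le> k \<longrightarrow> R j \<le> R k)
              \<and> (\<forall>k. \<exists>r. z k = P r)"
proof -
  define z where "z k = fst (Sq P m k)" for k
  define R where "R k = snd (Sq P m k)" for k
  have R0: "R k \<ge> 0" for k
    by (induction k) (auto simp: R_def m add_nonneg_nonneg)
  have a: "m (z k) \<le> R k" for k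
  proof (cases k)
    case 0 then show ?thesis by (simp add: z_def R_def)
  next
    case (Suc k') then show ?thesis using R0[of k'] by (simp add: z_def R_def)
  qed
  have b: "z (Suc k) = P (R k + 2)" for k by (simp add: z_def R_def)
  have "R k \<le> R (Suc k)" for k using m by (simp add: R_def)
  then have c: "j \<le> k \<Longrightarrow> R j \<le> R k" for j k by (rule lift_Suc_mono_le)
  have d: "\<exists>r. z k = P r" for k by (cases k) (auto simp: z_def)
  show ?thesis
    by (rule exI[of _ z], rule exI[of _ R]) (use a b c d in blast)
qed

lemma cont_local:
  fixes g :: "'a \<Rightarrow> real"
  assumes "\<And>x. x \<in> topspace X \<Longrightarrow> \<exists>W h. openin X W \<and> x \<in> W \<and> continuous_map X euclideanreal h \<and> (\<forall>y\<in>W. g y = h y)"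
  shows "continuous_map X euclideanreal g"
  unfolding continuous_map_def
proof (intro conjI allI impI)
  show "g \<in> topspace X \<rightarrow> topspace euclideanreal" by simp
next
  fix U :: "real set" assume U: "openin euclideanreal U"
  show "openin X {x \<in> topspace X. g x \<in> U}"
  proof (subst openin_subopen, intro ballI)
    fix x assume x: "x \<in> {x \<in> topspace X. g x \<in> U}"
    obtain W h where W: "openin X W" "x \<in> W" "continuous_map X euclideanreal h" "\<forall>y\<in>W. g y = h y"
      using assms x by blast
    define T where "T = W \<inter> {y \<in> topspace X. h y \<in> U}"
    have "openin X T" unfolding T_def by (intro openin_Int W(1) openin_continuous_map_preimage[OF W(3) U])
    moreover have "x \<in> T" using x W by (auto simp: T_def)
    moreover have "T \<subseteq> {x \<in> topspace X. g x \<in> U}" using W(4) by (auto simp: T_def)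
    ultimately show "\<exists>T. openin X T \<and> x \<in> T \<and> T \<subseteq> {x \<in> topspace X. g x \<in> U}" by blast
  qed
qed

definition Kf :: "'a topology \<Rightarrow> (('a\<Rightarrow>real)\<Rightarrow>real) \<Rightarrow> 'a set" where
  "Kf X \<phi> = (SOME K. finite K \<and> K \<subseteq> topspace X \<and> (\<forall>g\<in>CS X. \<phi> g = (\<Sum>x\<in>K. g x * \<phi> (ip X K x))))"

lemma Kf:
  assumes ty: "tychonoff_space X" and d: "\<phi> \<in> dual_space (Cp X)"
  shows "finite (Kf X \<phi>) \<and> Kf X \<phi> \<subseteq> topspace X \<and> (\<forall>g\<in>CS X. \<phi> g = (\<Sum>x\<in>Kf X \<phi>. g x * \<phi> (ip X (Kf X \<phi>) x)))"
proof -
  obtain K \<delta> where K: "finite K" "K \<subseteq> topspace X" "\<delta> > 0"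
    "\<forall>h\<in>CS X. (\<forall>x\<in>K. \<bar>h x\<bar> < \<delta>) \<longrightarrow> \<bar>\<phi> h\<bar> \<le> 1"
    using dual_bnd[OF d] by blast
  have "\<forall>g\<in>CS X. \<phi> g = (\<Sum>x\<in>K. g x * \<phi> (ip X K x))"
    using rep[OF ty K(1-3) dual_lin[OF d] K(4)] by blast
  then have "\<exists>K. finite K \<and> K \<subseteq> topspace X \<and> (\<forall>g\<in>CS X. \<phi> g = (\<Sum>x\<in>K. g x * \<phi> (ip X K x)))"
    using K(1,2) by blast
  from someI_ex[OF this] show ?thesis unfolding Kf_def .
qed

definition cf :: "'a topology \<Rightarrow> (('a\<Rightarrow>real)\<Rightarrow>real) \<Rightarrow> 'a \<Rightarrow> real" where
  "cf X \<phi> x = \<phi> (ip X (Kf X \<phi>) x)"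

definition supp :: "'a topology \<Rightarrow> (('a\<Rightarrow>real)\<Rightarrow>real) \<Rightarrow> 'a set" where
  "supp X \<phi> = {x \<in> Kf X \<phi>. cf X \<phi> x \<noteq> 0}"

lemma rep_supp:
  assumes ty: "tychonoff_space X" and d: "\<phi> \<in> dual_space (Cp X)" and g: "g \<in> CS X"
  shows "\<phi> g = (\<Sum>x\<in>supp X \<phi>. g x * cf X \<phi> x)"
proof -
  have K: "finite (Kf X \<phi>)" "\<phi> g = (\<Sum>x\<in>Kf X \<phi>. g x * cf X \<phi> x)"
    using Kf[OF ty d] g by (auto simp: cf_def)
  have "(\<Sum>x\<in>Kf X \<phi>. g x * cf X \<phi> x) = (\<Sum>x\<in>supp X \<phi>. g x * cf X \<phi> x)"
    by (rule sum.mono_neutral_right) (use K(1) in \<open>auto simp: supp_def\<close>)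
  then show ?thesis using K(2) by simp
qed

lemma agree:
  assumes ty: "tychonoff_space X" and d: "\<phi> \<in> dual_space (Cp X)" and gh: "g \<in> CS X" "h \<in> CS X"
    and e: "\<forall>x\<in>Kf X \<phi>. g x = h x"
  shows "\<phi> g = \<phi> h"
proof -
  have G: "\<phi> g = (\<Sum>x\<in>Kf X \<phi>. g x * \<phi> (ip X (Kf X \<phi>) x))" using Kf[OF ty d] gh(1) by blast
  have H: "\<phi> h = (\<Sum>x\<in>Kf X \<phi>. h x * \<phi> (ip X (Kf X \<phi>) x))" using Kf[OF ty d] gh(2) by blast
  show ?thesis unfolding G H by (rule sum.cong) (use e in auto)
qed

lemma supp_Kf: "supp X \<phi> \<subseteq> Kf X \<phi>"
  by (auto simp: supp_def)


lemma supp_finite: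
  assumes ty: "tychonoff_space X" and fb: "\<forall>A. functionally_bounded X A \<longrightarrow> finite A"
    and Bd: "B \<subseteq> dual_space (Cp X)" and Bb: "\<forall>g\<in>CS X. bounded ((\<lambda>\<phi>. \<phi> g) ` B)"
  shows "finite (\<Union>\<phi>\<in>B. supp X \<phi>)"
proof (rule ccontr)
  define S where "S = (\<Union>\<phi>\<in>B. supp X \<phi>)"
  assume "infinite (\<Union>\<phi>\<in>B. supp X \<phi>)"
  then have inf: "infinite S" by (simp add: S_def)
  have St: "S \<subseteq> topspace X"
  proof
    fix y assume "y \<in> S"
    then obtain \<psi> where \<psi>: "\<psi> \<in> B" "y \<in> supp X \<psi>" by (auto simp: S_def)
    then have "y \<in> Kf X \<psi>" using supp_Kf[of X \<psi>] by blast
    moreover have "Kf X \<psi> \<subseteq> topspace X" using Kf[OF ty, of \<psi>] \<psi>(1) Bd by blast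
    ultimately show "y \<in> topspace X" by blast
  qed
  have "\<not> functionally_bounded X S" using fb inf by blast
  then obtain f where fc: "continuous_map X euclideanreal f" and nbd: "\<not> bounded (f ` S)"
    using St by (auto simp: functionally_bounded_def)
  have unb: "\<exists>ps. fst ps \<in> B \<and> snd ps \<in> supp X (fst ps) \<and> \<bar>f (snd ps)\<bar> > r" for r
  proof -
    have "\<not> (\<forall>x\<in>f ` S. \<bar>x\<bar> \<le> r)" using nbd by (auto simp: bounded_real)
    then obtain y where "y \<in> S" "\<bar>f y\<bar> > r" by auto
    then obtain \<psi> where "\<psi> \<in> B" "y \<in> supp X \<psi>" by (auto simp: S_def)
    then show ?thesis using \<open>\<bar>f y\<bar> > r\<close> by (intro exI[of _ "(\<psi>, y)"]) simp
  qed
  define P where "P r = (SOME ps. fst ps \<in> B \<and> snd ps \<in> supp X (fst ps) \<and> \<bar>f (snd ps)\<bar> > r)" for r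
  have P: "fst (P r) \<in> B \<and> snd (P r) \<in> supp X (fst (P r)) \<and> \<bar>f (snd (P r))\<bar> > r" for r
    unfolding P_def by (rule someI_ex) (rule unb)
  define m where "m ps = (\<Sum>y\<in>Kf X (fst ps). \<bar>f y\<bar>)" for ps :: "(('a\<Rightarrow>real)\<Rightarrow>real) \<times> 'a"
  have m0: "\<And>ps. m ps \<ge> 0" by (simp add: m_def sum_nonneg)
  obtain z R where zR: "\<forall>k. m (z k) \<le> R k" "\<forall>k. z (Suc k) = P (R k + 2)" "\<forall>j k. j \<le> k \<longrightarrow> R j \<le> R k"
     "\<forall>k. \<exists>r. z k = P r"
    using rec_seq[of m P, OF m0] by blast
  define \<phi> where "\<phi> k = fst (z k)" for k
  define s where "s k = snd (z k)" for k
  define K where "K k = Kf X (\<phi> k)" for k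
  have zk: "\<phi> k \<in> B \<and> s k \<in> supp X (\<phi> k)" for k
  proof -
    obtain r where "z k = P r" using zR(4) by blast
    then show ?thesis using P[of r] by (simp add: \<phi>_def s_def)
  qed
  have \<phi>B: "\<phi> k \<in> B" and \<phi>d: "\<phi> k \<in> dual_space (Cp X)" for k using zk Bd by auto
  have sK: "s k \<in> K k" for k using zk supp_Kf[of X "\<phi> k"] by (auto simp: K_def)
  have Kfin: "finite (K k)" and Kt: "K k \<subseteq> topspace X" for k
    using Kf[OF ty \<phi>d] by (auto simp: K_def)
  have Kbound: "\<bar>f y\<bar> \<le> R j" if "y \<in> K j" for y j
  proof -
    have "\<bar>f y\<bar> \<le> (\<Sum>y\<in>K j. \<bar>f y\<bar>)" by (rule member_le_sum) (use that Kfin in auto)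
    also have "\<dots> = m (z j)" by (simp add: m_def K_def \<phi>_def)
    also have "\<dots> \<le> R j" using zR(1) by blast
    finally show ?thesis .
  qed
  define a where "a k = \<bar>f (s k)\<bar>" for k
  have big: "a (Suc k) > R k + 2" for k
    using P[of "R k + 2"] zR(2) by (simp add: a_def s_def)
  have gapK: "a k > \<bar>f y\<bar> + 2" if "j < k" "y \<in> K j" for j k y
  proof -
    define k' where "k' = k - 1"
    have k': "k = Suc k'" using that(1) by (simp add: k'_def)
    have "\<bar>f y\<bar> \<le> R j" using Kbound that(2) .
    also have "R j \<le> R k'" using zR(3) that(1) k' by simp
    finally show ?thesis using big[of k'] k' by simp
  qed
  have gap: "a k > a j + 2" if "j < k" for j k
    using gapK[OF that sK[of j]] by (simp add: a_def)
  have uniq: "i = j" if "\<bar>a i - c\<bar> < 1" "\<bar>a j - c\<bar> < 1" for i j c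
  proof (rule ccontr)
    assume "i \<noteq> j"
    then consider "i < j" | "j < i" by linarith
    then show False
    proof cases
      case 1 then show False using gap[OF 1] that by linarith
    next
      case 2 then show False using gap[OF 2] that by linarith
    qed
  qed
  define tent where "tent t = max 0 (1 - 2 * \<bar>t\<bar>)" for t :: real
  have tent0: "tent t = 0" if "\<bar>t\<bar> \<ge> 1/2" for t using that by (simp add: tent_def)
  have tentc: "continuous_map X euclideanreal (\<lambda>x. tent (\<bar>f x\<bar> - a k))" for k
    unfolding tent_def by (intro continuous_intros fc)
  define e where "e k = ip X (K k) (s k)" for k
  have e: "e k \<in> CS X \<and> e k (s k) = 1 \<and> (\<forall>y\<in>K k - {s k}. e k y = 0)" for k
    using ip[OF ty Kfin Kt, of "s k"] sK Kt unfolding e_def by blast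
  define b where "b k = (\<lambda>x. e k x * tent (\<bar>f x\<bar> - a k))" for k
  have bC: "b k \<in> CS X" for k unfolding b_def using CS_mult e tentc by blast
  have bs: "b k (s k) = 1" for k using e by (simp add: b_def tent_def a_def)
  have bK: "b k y = 0" if "y \<in> K k" "y \<noteq> s k" for k y using e that by (simp add: b_def)
  have bKj: "b k y = 0" if "j < k" "y \<in> K j" for j k y
  proof -
    have "\<bar>\<bar>f y\<bar> - a k\<bar> \<ge> 1/2" using gapK[OF that] by simp
    then show ?thesis by (simp add: b_def tent0)
  qed
  have bsupp: "\<bar>\<bar>f y\<bar> - a k\<bar> < 1/2" if "b k y \<noteq> 0" for k y
  proof (rule ccontr)
    assume "\<not> ?thesis"
    then have "tent (\<bar>f y\<bar> - a k) = 0" by (intro tent0) simp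
    then show False using that by (simp add: b_def)
  qed
  have bout: "b k x = 0" if "x \<notin> topspace X" for k x
    using bC[of k] that by (simp add: CS_def)
  define \<gamma> where "\<gamma> k = cf X (\<phi> k) (s k)" for k
  have \<gamma>0: "\<gamma> k \<noteq> 0" for k using zk by (simp add: \<gamma>_def supp_def)
  define \<alpha> where "\<alpha> k j = \<phi> k (b j)" for k j
  obtain t where t: "\<forall>k. t k = (real k + \<bar>\<Sum>j<k. t j * \<alpha> k j\<bar>) / \<gamma> k"
    using rec_t by blast
  define g where "g x = (\<Sum>j. t j * b j x)" for x
  have gsum: "g x = (\<Sum>j\<in>N. t j * b j x)" if "finite N" "\<forall>j. j \<notin> N \<longrightarrow> b j x = 0" for x N
    unfolding g_def by (rule suminf_finite) (use that in auto)
  have gC: "g \<in> CS X"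
  proof -
    have "continuous_map X euclideanreal g"
    proof (rule cont_local)
      fix x assume x: "x \<in> topspace X"
      define W where "W = {y \<in> topspace X. \<bar>\<bar>f y\<bar> - \<bar>f x\<bar>\<bar> \<in> {..<1/2}}"
      have Wo: "openin X W" unfolding W_def
        by (rule openin_continuous_map_preimage) (auto intro!: continuous_intros fc)
      have xW: "x \<in> W" using x by (simp add: W_def)
      define j0 where "j0 = (if \<exists>j. \<bar>a j - \<bar>f x\<bar>\<bar> < 1 then (SOME j. \<bar>a j - \<bar>f x\<bar>\<bar> < 1) else 0)"
      have z0: "b j y = 0" if "j \<noteq> j0" "y \<in> W" for j y
      proof (rule ccontr)
        assume "b j y \<noteq> 0"
        then have "\<bar>\<bar>f y\<bar> - a j\<bar> < 1/2" by (rule bsupp)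
        moreover have "\<bar>\<bar>f y\<bar> - \<bar>f x\<bar>\<bar> < 1/2" using that(2) by (simp add: W_def)
        ultimately have aj: "\<bar>a j - \<bar>f x\<bar>\<bar> < 1" by linarith
        then have ex: "\<exists>j. \<bar>a j - \<bar>f x\<bar>\<bar> < 1" by blast
        then have "\<bar>a j0 - \<bar>f x\<bar>\<bar> < 1" unfolding j0_def using someI_ex[OF ex] by simp
        then have "j = j0" using uniq aj by blast
        then show False using that(1) by simp
      qed
      have "g y = t j0 * b j0 y" if "y \<in> W" for y
        using gsum[of "{j0}" y] z0[OF _ that] by auto
      moreover have "continuous_map X euclideanreal (\<lambda>y. t j0 * b j0 y)"
        using bC[of j0] by (intro continuous_map_real_mult_left) (simp add: CS_def)
      ultimately show "\<exists>W h. openin X W \<and> x \<in> W \<and> continuous_map X euclideanreal h \<and> (\<forall>y\<in>W. g y = h y)"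
        using Wo xW by blast
    qed
    moreover have "g x = 0" if "x \<notin> topspace X" for x
      using gsum[of "{}" x] bout[OF that] by simp
    ultimately show ?thesis by (simp add: CS_def)
  qed
  have main: "\<phi> k g \<ge> real k" for k
  proof -
    define h where "h = (\<Sum>j\<in>{..k}. t j *\<^sub>R b j)"
    have hC: "h \<in> CS X" unfolding h_def by (rule CS_sum) (use bC in \<open>auto intro: CS_scaleR\<close>)
    have "g y = h y" if "y \<in> K k" for y
    proof -
      have "g y = (\<Sum>j\<in>{..k}. t j * b j y)"
      proof (rule gsum)
        show "\<forall>j. j \<notin> {..k} \<longrightarrow> b j y = 0"
        proof (intro allI impI)
          fix j assume "j \<notin> {..k}"
          then have "k < j" by simp
          then show "b j y = 0" using bKj that by blast
        qed
      qed simp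
      also have "\<dots> = h y" by (simp add: h_def sum_fun_apply scaleR_fun_def)
      finally show ?thesis .
    qed
    then have "\<phi> k g = \<phi> k h" by (intro agree[OF ty \<phi>d gC hC]) (simp add: K_def)
    also have "\<phi> k h = (\<Sum>j\<in>{..k}. \<phi> k (t j *\<^sub>R b j))"
      unfolding h_def by (rule lin_sum[OF dual_lin[OF \<phi>d]]) (use bC in \<open>auto intro: CS_scaleR\<close>)
    also have "\<dots> = (\<Sum>j\<in>{..k}. t j * \<alpha> k j)"
      by (rule sum.cong[OF refl]) (simp add: lin_scale[OF dual_lin[OF \<phi>d] bC] \<alpha>_def)
    also have "\<dots> = (\<Sum>j<k. t j * \<alpha> k j) + t k * \<alpha> k k"
      by (simp add: lessThan_Suc_atMost[symmetric])
    finally have eq: "\<phi> k g = (\<Sum>j<k. t j * \<alpha> k j) + t k * \<alpha> k k" .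
    have "\<alpha> k k = (\<Sum>y\<in>K k. b k y * \<phi> k (ip X (K k) y))"
      using Kf[OF ty \<phi>d] bC by (simp add: \<alpha>_def K_def)
    also have "\<dots> = b k (s k) * \<phi> k (ip X (K k) (s k)) + (\<Sum>y\<in>K k - {s k}. b k y * \<phi> k (ip X (K k) y))"
      using Kfin[of k] sK[of k] by (simp add: sum.remove)
    also have "(\<Sum>y\<in>K k - {s k}. b k y * \<phi> k (ip X (K k) y)) = 0"
      by (rule sum.neutral) (use bK in auto)
    finally have aeq: "\<alpha> k k = \<gamma> k" using bs by (simp add: \<gamma>_def cf_def K_def)
    moreover have "t k * \<gamma> k = real k + \<bar>\<Sum>j<k. t j * \<alpha> k j\<bar>"
    proof -
      have tk: "t k = (real k + \<bar>\<Sum>j<k. t j * \<alpha> k j\<bar>) / \<gamma> k" using t by blast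
      show ?thesis by (subst tk) (use \<gamma>0[of k] in simp)
    qed
    ultimately have "\<phi> k g = (\<Sum>j<k. t j * \<alpha> k j) + (real k + \<bar>\<Sum>j<k. t j * \<alpha> k j\<bar>)"
      using eq by simp
    moreover have "- (\<Sum>j<k. t j * \<alpha> k j) \<le> \<bar>\<Sum>j<k. t j * \<alpha> k j\<bar>" by (rule abs_ge_minus_self)
    ultimately show ?thesis by linarith
  qed
  obtain M where M: "\<forall>\<psi>\<in>B. \<bar>\<psi> g\<bar> \<le> M" using Bb gC by (auto simp: bounded_real)
  define k where "k = nat \<lceil>M\<rceil> + 1"
  have "real k > M" by (simp add: k_def) linarith
  moreover have "\<bar>\<phi> k g\<bar> \<le> M" using M \<phi>B by blast
  ultimately show False using main[of k] by linarith
qed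


lemma dual_uniform_bound:
  assumes ty: "tychonoff_space X" and fb: "\<forall>A. functionally_bounded X A \<longrightarrow> finite A"
    and Bd: "B \<subseteq> dual_space (Cp X)" and Bb: "\<forall>g\<in>CS X. bounded ((\<lambda>\<phi>. \<phi> g) ` B)"
  shows "\<exists>S C. finite S \<and> S \<subseteq> topspace X \<and> C \<ge> 0 \<and> (\<forall>\<phi>\<in>B. \<forall>u\<in>CS X. \<bar>\<phi> u\<bar> \<le> C * (\<Sum>y\<in>S. \<bar>u y\<bar>))"
proof -
  define S where "S = (\<Union>\<phi>\<in>B. supp X \<phi>)"
  have fS: "finite S" unfolding S_def by (rule supp_finite[OF ty fb Bd Bb])
  have St: "S \<subseteq> topspace X"
  proof
    fix y assume "y \<in> S"
    then obtain \<psi> where \<psi>: "\<psi> \<in> B" "y \<in> supp X \<psi>" by (auto simp: S_def)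
    then have "y \<in> Kf X \<psi>" using supp_Kf[of X \<psi>] by blast
    moreover have "Kf X \<psi> \<subseteq> topspace X" using Kf[OF ty, of \<psi>] \<psi>(1) Bd by blast
    ultimately show "y \<in> topspace X" by blast
  qed
  have ipS: "\<And>x. x \<in> S \<Longrightarrow> ip X S x \<in> CS X \<and> ip X S x x = 1 \<and> (\<forall>y\<in>S-{x}. ip X S x y = 0)"
    using ip[OF ty fS St] St by blast
  have "\<forall>x\<in>S. \<exists>M. \<forall>\<phi>\<in>B. \<bar>\<phi> (ip X S x)\<bar> \<le> M"
    using Bb ipS by (auto simp: bounded_real)
  then obtain Cb where Cb: "\<forall>x\<in>S. \<forall>\<phi>\<in>B. \<bar>\<phi> (ip X S x)\<bar> \<le> Cb x" using bchoice by metis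
  define C where "C = (\<Sum>x\<in>S. \<bar>Cb x\<bar>)"
  have C0: "C \<ge> 0" by (simp add: C_def sum_nonneg)
  have cfb: "\<bar>cf X \<phi> x\<bar> \<le> C" if \<phi>: "\<phi> \<in> B" and x: "x \<in> supp X \<phi>" for \<phi> x
  proof -
    have xS: "x \<in> S" using \<phi> x by (auto simp: S_def)
    have sS: "supp X \<phi> \<subseteq> S" using \<phi> by (auto simp: S_def)
    have fin: "finite (supp X \<phi>)" using fS sS by (rule finite_subset[rotated])
    have "\<phi> (ip X S x) = (\<Sum>y\<in>supp X \<phi>. ip X S x y * cf X \<phi> y)"
      using rep_supp[OF ty _ conjunct1[OF ipS[OF xS]]] \<phi> Bd by blast
    also have "\<dots> = ip X S x x * cf X \<phi> x + (\<Sum>y\<in>supp X \<phi> - {x}. ip X S x y * cf X \<phi> y)"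
      using fin x by (simp add: sum.remove)
    also have "(\<Sum>y\<in>supp X \<phi> - {x}. ip X S x y * cf X \<phi> y) = 0"
      by (rule sum.neutral) (use ipS[OF xS] sS in auto)
    finally have "\<phi> (ip X S x) = cf X \<phi> x" using ipS[OF xS] by simp
    then have "\<bar>cf X \<phi> x\<bar> \<le> Cb x" using Cb xS \<phi> by metis
    also have "\<dots> \<le> \<bar>Cb x\<bar>" by simp
    also have "\<dots> \<le> C" unfolding C_def by (rule member_le_sum) (use xS fS in auto)
    finally show ?thesis .
  qed
  have "\<forall>\<phi>\<in>B. \<forall>u\<in>CS X. \<bar>\<phi> u\<bar> \<le> C * (\<Sum>y\<in>S. \<bar>u y\<bar>)"
  proof (intro ballI)
    fix \<phi> u assume \<phi>: "\<phi> \<in> B" and u: "u \<in> CS X"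
    have sS: "supp X \<phi> \<subseteq> S" using \<phi> by (auto simp: S_def)
    have "\<bar>\<phi> u\<bar> = \<bar>\<Sum>y\<in>supp X \<phi>. u y * cf X \<phi> y\<bar>" using rep_supp[OF ty _ u] \<phi> Bd by auto
    also have "\<dots> \<le> (\<Sum>y\<in>supp X \<phi>. \<bar>u y * cf X \<phi> y\<bar>)" by (rule sum_abs)
    also have "\<dots> \<le> (\<Sum>y\<in>supp X \<phi>. C * \<bar>u y\<bar>)"
    proof (rule sum_mono)
      fix y assume y: "y \<in> supp X \<phi>"
      have "\<bar>u y * cf X \<phi> y\<bar> = \<bar>cf X \<phi> y\<bar> * \<bar>u y\<bar>" by (simp add: abs_mult)
      also have "\<dots> \<le> C * \<bar>u y\<bar>" by (rule mult_right_mono[OF cfb[OF \<phi> y]]) simp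
      finally show "\<bar>u y * cf X \<phi> y\<bar> \<le> C * \<bar>u y\<bar>" .
    qed
    also have "\<dots> \<le> (\<Sum>y\<in>S. C * \<bar>u y\<bar>)"
      by (rule sum_mono2[OF fS sS]) (use C0 in simp)
    also have "\<dots> = C * (\<Sum>y\<in>S. \<bar>u y\<bar>)" by (simp add: sum_distrib_left)
    finally show "\<bar>\<phi> u\<bar> \<le> C * (\<Sum>y\<in>S. \<bar>u y\<bar>)" .
  qed
  with fS St C0 show ?thesis by blast
qed

lemma fb_bEGP:
  assumes ty: "tychonoff_space X" and p: "1 \<le> p" and fb: "\<forall>A. functionally_bounded X A \<longrightarrow> finite A"
  shows "bEGP p q (Cp X)"
  unfolding bEGP_def strongly_precompact_def
proof (intro allI impI)
  fix A B and \<epsilon> :: real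
  assume A: "pq_E_limited p q (Cp X) A"
    and B: "B \<subseteq> dual_space (Cp X)" and Bb: "\<forall>x\<in>topspace (Cp X). bounded ((\<lambda>\<phi>. \<phi> x) ` B)"
    and e: "\<epsilon> > 0"
  have AC: "A \<subseteq> CS X" using A by (simp add: pq_E_limited_def topspace_Cp)
  obtain S C where SC: "finite S" "S \<subseteq> topspace X" "C \<ge> 0"
    "\<forall>\<phi>\<in>B. \<forall>u\<in>CS X. \<bar>\<phi> u\<bar> \<le> C * (\<Sum>y\<in>S. \<bar>u y\<bar>)"
    using dual_uniform_bound[OF ty fb B] Bb by (auto simp: topspace_Cp)
  define \<delta> where "\<delta> = \<epsilon> / ((C + 1) * (real (card S) + 1))"
  have dpos: "\<delta> > 0" using e SC(3) by (simp add: \<delta>_def)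
  have bd: "\<forall>x\<in>S. \<exists>M. \<forall>f\<in>A. \<bar>f x\<bar> \<le> M" using Elim_bounded[OF p A] SC(2) by blast
  obtain F where F: "finite F" "F \<subseteq> CS X"
    "A \<subseteq> (\<Union>f\<in>F. (\<lambda>u. f + u) ` {u \<in> CS X. \<forall>x\<in>S. \<bar>u x\<bar> < \<delta>})"
    using grid_cover[OF ty SC(1,2) dpos AC bd] by blast
  have sub: "{u \<in> CS X. \<forall>x\<in>S. \<bar>u x\<bar> < \<delta>} \<subseteq> {u\<in>topspace (Cp X). \<forall>\<phi>\<in>B. \<bar>\<phi> u\<bar> \<le> \<epsilon>}"
  proof (rule subsetI)
    fix u assume "u \<in> {u \<in> CS X. \<forall>x\<in>S. \<bar>u x\<bar> < \<delta>}"
    then have u: "u \<in> CS X" "\<forall>x\<in>S. \<bar>u x\<bar> < \<delta>" by auto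
    have "u \<in> topspace (Cp X)" using u by (simp add: topspace_Cp)
    moreover have "\<forall>\<phi>\<in>B. \<bar>\<phi> u\<bar> \<le> \<epsilon>"
    proof
      fix \<phi> assume \<phi>: "\<phi> \<in> B"
      have s1: "(\<Sum>y\<in>S. \<bar>u y\<bar>) \<le> real (card S) * \<delta>"
        using sum_bounded_above[of S "\<lambda>y. \<bar>u y\<bar>" \<delta>] u(2) by (simp add: less_imp_le)
      have "\<bar>\<phi> u\<bar> \<le> C * (\<Sum>y\<in>S. \<bar>u y\<bar>)" using SC(4) \<phi> u(1) by blast
      also have "\<dots> \<le> C * (real (card S) * \<delta>)" by (rule mult_left_mono[OF s1 SC(3)])
      also have "\<dots> \<le> (C + 1) * ((real (card S) + 1) * \<delta>)"
        by (rule mult_mono) (use SC(3) dpos in \<open>auto intro!: mult_right_mono\<close>)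
      also have "\<dots> = \<epsilon>" using SC(3) by (simp add: \<delta>_def)
      finally show "\<bar>\<phi> u\<bar> \<le> \<epsilon>" .
    qed
    ultimately show "u \<in> {u\<in>topspace (Cp X). \<forall>\<phi>\<in>B. \<bar>\<phi> u\<bar> \<le> \<epsilon>}" by simp
  qed
  have "A \<subseteq> (\<Union>f\<in>F. (\<lambda>u. f + u) ` {u\<in>topspace (Cp X). \<forall>\<phi>\<in>B. \<bar>\<phi> u\<bar> \<le> \<epsilon>})"
    using F(3) sub by blast
  then show "\<exists>F. finite F \<and> F \<subseteq> topspace (Cp X) \<and>
           A \<subseteq> (\<Union>f\<in>F. (\<lambda>u. f + u) ` {u\<in>topspace (Cp X). \<forall>\<phi>\<in>B. \<bar>\<phi> u\<bar> \<le> \<epsilon>})"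
    using F(1,2) by (intro exI[of _ F]) (simp add: topspace_Cp)
qed

theorem theoremt:
  fixes p q :: ereal and X :: "'a topology"
  assumes "1 \<le> p" and "p \<le> q" and "tychonoff_space X"
  shows "(EGP p q (Cp X) \<longleftrightarrow> X = discrete_topology (topspace X))
       \<and> (bEGP p q (Cp X) \<longleftrightarrow> (\<forall>A. functionally_bounded X A \<longrightarrow> finite A))
       \<and> prEGP p q (Cp X) \<and> prGP p q (Cp X)"
proof (intro conjI iffI)
  show "X = discrete_topology (topspace X)" if "EGP p q (Cp X)"
    using EGP_discrete[OF assms(3,1,2) that] .
  show "EGP p q (Cp X)" if "X = discrete_topology (topspace X)"
    using discrete_EGP[OF assms(3,1) that] .
  show "\<forall>A. functionally_bounded X A \<longrightarrow> finite A" if "bEGP p q (Cp X)"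
    using bEGP_fb_finite[OF assms(3,1,2) that] by blast
  show "bEGP p q (Cp X)" if "\<forall>A. functionally_bounded X A \<longrightarrow> finite A"
    using fb_bEGP[OF assms(3,1) that] .
  show "prEGP p q (Cp X)" using prEGP_Cp[OF assms(3,1)] .
  show "prGP p q (Cp X)" using prGP_Cp[OF assms(3,1)] .
qed


end
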